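(* Let $\Gamma$ be a finite graph and $\mathcal{G}$ a collection of non-trivial groups indexed by the vertices of $\Gamma$. Decompose $\Gamma$ as a join $$\Gamma=\{u_1\}\ast\cdots\ast\{u_r\}\ast\{a_1,b_1\}\ast\cdots\ast\{a_s,b_s\}\ast\Lambda_1\ast\cdots\ast\Lambda_n$$ where $u_1,\ldots,u_r$ are single vertices, each $a_i,b_i$ are two non-adjacent vertices whose vertex-groups are $\mathbb{Z}_2$, and each $\Lambda_i$ is an irreducible subgraph containing at least two vertices whose vertex-groups are not all $\mathbb{Z}_2$... more precisely, containing at least two vertices not both labelled by $\mathbb{Z}_2$. Then $$\mathrm{VZ}(\Gamma\mathcal{G})=\mathrm{VZ}(\langle u_1\rangle)\times\cdots\times\mathrm{VZ}(\langle u_r\rangle)\times\langle a_1b_1\rangle\times\cdots\times\langle a_sb_s\rangle.$$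
   Context: The graph product is $\Gamma\mathcal{G}=\langle G_u\ (u\in V(\Gamma))\mid [G_u,G_v]=1 \text{ whenever } u,v \text{ adjacent}\rangle$; $\langle u\rangle$ denotes the vertex-group $G_u$ (a vertex is "labelled by" its vertex-group). The join $\Phi\ast\Psi$ of graphs is obtained from $\Phi\sqcup\Psi$ by joining every vertex of $\Phi$ to every vertex of $\Psi$; a graph is irreducible if it does not decompose as a join of two non-empty graphs. The virtual centre $\mathrm{VZ}(G)$ of a group $G$ is the set of elements of $G$ that centralise some finite-index subgroup of $G$. *)

theory Defs
  imports "HOL-Algebra.Algebra"
begin

definition fin_graph :: "'v set \<Rightarrow> ('v \<Rightarrow> 'v \<Rightarrow> bool) \<Rightarrow> bool" where
  "fin_graph V E \<longleftrightarrow> finite V \<and> (\<forall>u v. E u v \<longrightarrow> u \<in> V \<and> v \<in> V)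
     \<and> (\<forall>u v. E u v \<longrightarrow> E v u) \<and> (\<forall>u. \<not> E u u)"

definition irreducible_sub :: "('v \<Rightarrow> 'v \<Rightarrow> bool) \<Rightarrow> 'v set \<Rightarrow> bool" where
  "irreducible_sub E L \<longleftrightarrow> L \<noteq> {} \<and>
     \<not> (\<exists>A B. A \<noteq> {} \<and> B \<noteq> {} \<and> A \<union> B = L \<and> A \<inter> B = {} \<and> (\<forall>a\<in>A. \<forall>b\<in>B. E a b))"

text \<open>Words over the vertex groups and the defining relations of the graph product
  (free product of the vertex groups modulo commutation of adjacent vertex groups).\<close>
definition gp_words :: "'v set \<Rightarrow> ('v \<Rightarrow> 'g monoid) \<Rightarrow> ('v \<times> 'g) list set" where
  "gp_words V G = {w. \<forall>(v, g) \<in> set w. v \<in> V \<and> g \<in> carrier (G v)}"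

inductive gp_eq :: "'v set \<Rightarrow> ('v \<Rightarrow> 'v \<Rightarrow> bool) \<Rightarrow> ('v \<Rightarrow> 'g monoid)
    \<Rightarrow> ('v \<times> 'g) list \<Rightarrow> ('v \<times> 'g) list \<Rightarrow> bool"
  for V E G where
  gp_refl: "w \<in> gp_words V G \<Longrightarrow> gp_eq V E G w w"
| gp_sym: "gp_eq V E G w w' \<Longrightarrow> gp_eq V E G w' w"
| gp_trans: "gp_eq V E G w w' \<Longrightarrow> gp_eq V E G w' w'' \<Longrightarrow> gp_eq V E G w w''"
| gp_unit: "xs \<in> gp_words V G \<Longrightarrow> ys \<in> gp_words V G \<Longrightarrow> v \<in> V \<Longrightarrow>
    gp_eq V E G (xs @ [(v, \<one>\<^bsub>G v\<^esub>)] @ ys) (xs @ ys)"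
| gp_merge: "xs \<in> gp_words V G \<Longrightarrow> ys \<in> gp_words V G \<Longrightarrow> v \<in> V \<Longrightarrow>
    g \<in> carrier (G v) \<Longrightarrow> h \<in> carrier (G v) \<Longrightarrow>
    gp_eq V E G (xs @ [(v, g), (v, h)] @ ys) (xs @ [(v, g \<otimes>\<^bsub>G v\<^esub> h)] @ ys)"
| gp_comm: "xs \<in> gp_words V G \<Longrightarrow> ys \<in> gp_words V G \<Longrightarrow> E u v \<Longrightarrow> u \<in> V \<Longrightarrow> v \<in> V \<Longrightarrow>
    g \<in> carrier (G u) \<Longrightarrow> h \<in> carrier (G v) \<Longrightarrow>
    gp_eq V E G (xs @ [(u, g), (v, h)] @ ys) (xs @ [(v, h), (u, g)] @ ys)"

definition gp_class :: "'v set \<Rightarrow> ('v \<Rightarrow> 'v \<Rightarrow> bool) \<Rightarrow> ('v \<Rightarrow> 'g monoid)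
    \<Rightarrow> ('v \<times> 'g) list \<Rightarrow> ('v \<times> 'g) list set" where
  "gp_class V E G w = {w'. gp_eq V E G w w'}"

definition gp_mult :: "'v set \<Rightarrow> ('v \<Rightarrow> 'v \<Rightarrow> bool) \<Rightarrow> ('v \<Rightarrow> 'g monoid)
    \<Rightarrow> ('v \<times> 'g) list set \<Rightarrow> ('v \<times> 'g) list set \<Rightarrow> ('v \<times> 'g) list set" where
  "gp_mult V E G W1 W2 = {z. \<exists>p\<in>W1. \<exists>q\<in>W2. gp_eq V E G (p @ q) z}"

definition graph_product :: "'v set \<Rightarrow> ('v \<Rightarrow> 'v \<Rightarrow> bool) \<Rightarrow> ('v \<Rightarrow> 'g monoid)
    \<Rightarrow> ('v \<times> 'g) list set monoid" where
  "graph_product V E G =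
    \<lparr> carrier = gp_class V E G ` gp_words V G,
      monoid.mult = gp_mult V E G,
      one = gp_class V E G [] \<rparr>"

definition gp_incl :: "'v set \<Rightarrow> ('v \<Rightarrow> 'v \<Rightarrow> bool) \<Rightarrow> ('v \<Rightarrow> 'g monoid)
    \<Rightarrow> 'v \<Rightarrow> 'g \<Rightarrow> ('v \<times> 'g) list set" where
  "gp_incl V E G v g = gp_class V E G [(v, g)]"

definition virtual_centre :: "('a, 'b) monoid_scheme \<Rightarrow> 'a set" where
  "virtual_centre H = {x \<in> carrier H. \<exists>K. subgroup K H \<and> finite (rcosets\<^bsub>H\<^esub> K)
      \<and> (\<forall>k\<in>K. x \<otimes>\<^bsub>H\<^esub> k = k \<otimes>\<^bsub>H\<^esub> x)}"

definition is_Z2 :: "'g monoid \<Rightarrow> bool" where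
  "is_Z2 H \<longleftrightarrow> H \<cong> integer_mod_group 2"

definition join_decomposition :: "'v set \<Rightarrow> ('v \<Rightarrow> 'v \<Rightarrow> bool) \<Rightarrow> ('v \<Rightarrow> 'g monoid)
    \<Rightarrow> 'v set set \<Rightarrow> bool" where
  "join_decomposition V E G P \<longleftrightarrow>
     \<Union>P = V \<and> {} \<notin> P \<and>
     (\<forall>B\<in>P. \<forall>C\<in>P. B \<noteq> C \<longrightarrow> B \<inter> C = {} \<and> (\<forall>x\<in>B. \<forall>y\<in>C. E x y)) \<and>
     (\<forall>B\<in>P. card B = 1
        \<or> (\<exists>a b. B = {a, b} \<and> a \<noteq> b \<and> \<not> E a b \<and> is_Z2 (G a) \<and> is_Z2 (G b))
        \<or> (irreducible_sub E B \<and> card B \<ge> 2 \<and> \<not> (card B = 2 \<and> (\<forall>v\<in>B. is_Z2 (G v)))))"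

end

theory Submission
  imports Defs
begin

locale gpl =
  fixes V :: "'v set" and E :: "'v \<Rightarrow> 'v \<Rightarrow> bool" and G :: "'v \<Rightarrow> 'g monoid"
  assumes fg: "fin_graph V E"
    and grp: "\<And>v. v \<in> V \<Longrightarrow> group (G v)"
begin

abbreviation "W \<equiv> gp_words V G"
abbreviation "eqw \<equiv> gp_eq V E G"
abbreviation "GP \<equiv> graph_product V E G"
abbreviation "cls \<equiv> gp_class V E G"

lemma E_sym: "E u v \<Longrightarrow> E v u" using fg unfolding fin_graph_def by blast
lemma E_irr: "\<not> E u u" using fg unfolding fin_graph_def by blast
lemma E_V: "E u v \<Longrightarrow> u \<in> V \<and> v \<in> V" using fg unfolding fin_graph_def by blast
lemma finV: "finite V" using fg unfolding fin_graph_def by blast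

lemma words_append[simp]: "xs @ ys \<in> W \<longleftrightarrow> xs \<in> W \<and> ys \<in> W"
  by (auto simp: gp_words_def)
lemma words_Cons[simp]: "x # ys \<in> W \<longleftrightarrow> fst x \<in> V \<and> snd x \<in> carrier (G (fst x)) \<and> ys \<in> W"
  by (cases x) (auto simp: gp_words_def)
lemma words_Nil[simp]: "[] \<in> W" by (simp add: gp_words_def)

lemma eq_words: "eqw w w' \<Longrightarrow> w \<in> W \<and> w' \<in> W"
proof (induction rule: gp_eq.induct)
  case (gp_merge xs ys v g h)
  then show ?case using group.subgroupE(4)[OF grp[of v] group.subgroup_self[OF grp[of v]]]
    by (auto simp: monoid.m_closed[OF group.is_monoid[OF grp]])
next
  case (gp_unit xs ys v) then show ?case by (auto simp: monoid.one_closed[OF group.is_monoid[OF grp]])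
qed (auto)

lemma eq_refl: "w \<in> W \<Longrightarrow> eqw w w" by (rule gp_refl)
lemma eq_sym: "eqw w w' \<Longrightarrow> eqw w' w" by (rule gp_sym)
lemma eq_trans: "eqw a b \<Longrightarrow> eqw b c \<Longrightarrow> eqw a c" by (rule gp_trans)

lemma eq_ctxt: "eqw a b \<Longrightarrow> c \<in> W \<Longrightarrow> d \<in> W \<Longrightarrow> eqw (c @ a @ d) (c @ b @ d)"
proof (induction rule: gp_eq.induct)
  case (gp_refl w) then show ?case by (intro gp_eq.gp_refl) simp
next
  case (gp_sym w w') then show ?case by (blast intro: gp_eq.gp_sym)
next
  case (gp_trans w w' w'') then show ?case by (blast intro: gp_eq.gp_trans)
next
  case (gp_unit xs ys v)
  have "eqw ((c @ xs) @ [(v, \<one>\<^bsub>G v\<^esub>)] @ (ys @ d)) ((c @ xs) @ (ys @ d))"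
    by (rule gp_eq.gp_unit) (use gp_unit in auto)
  then show ?case by simp
next
  case (gp_merge xs ys v g h)
  have "eqw ((c @ xs) @ [(v, g), (v, h)] @ (ys @ d)) ((c @ xs) @ [(v, g \<otimes>\<^bsub>G v\<^esub> h)] @ (ys @ d))"
    by (rule gp_eq.gp_merge) (use gp_merge in auto)
  then show ?case by simp
next
  case (gp_comm xs ys u v g h)
  have "eqw ((c @ xs) @ [(u, g), (v, h)] @ (ys @ d)) ((c @ xs) @ [(v, h), (u, g)] @ (ys @ d))"
    by (rule gp_eq.gp_comm) (use gp_comm in auto)
  then show ?case by simp
qed

lemma eq_app: "eqw a b \<Longrightarrow> eqw c d \<Longrightarrow> eqw (a @ c) (b @ d)"
proof -
  assume ab: "eqw a b" and cd: "eqw c d"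
  have "eqw ([] @ a @ c) ([] @ b @ c)" by (rule eq_ctxt[OF ab]) (use eq_words[OF cd] in auto)
  moreover have "eqw (b @ c @ []) (b @ d @ [])" by (rule eq_ctxt[OF cd]) (use eq_words[OF ab] in auto)
  ultimately show ?thesis by (auto intro: eq_trans)
qed

lemma cls_eq_iff: "w \<in> W \<Longrightarrow> cls w = cls w' \<longleftrightarrow> eqw w w'"
  unfolding gp_class_def
proof
  assume w: "w \<in> W" and "{w'a. eqw w w'a} = {w'a. eqw w' w'a}"
  then show "eqw w w'" by (metis (mono_tags, lifting) eq_refl mem_Collect_eq eq_sym)
next
  assume "eqw w w'" then show "{w'a. eqw w w'a} = {w'a. eqw w' w'a}"
    by (auto intro: eq_trans eq_sym)
qed

lemma cls_mem: "w \<in> W \<Longrightarrow> w \<in> cls w" by (simp add: gp_class_def eq_refl)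

lemma mult_cls: "a \<in> W \<Longrightarrow> b \<in> W \<Longrightarrow> gp_mult V E G (cls a) (cls b) = cls (a @ b)"
  unfolding gp_mult_def gp_class_def
  by (auto intro: eq_trans eq_app eq_sym eq_refl)

lemma GP_carrier: "carrier GP = cls ` W" by (simp add: graph_product_def)
lemma GP_mult: "a \<in> W \<Longrightarrow> b \<in> W \<Longrightarrow> cls a \<otimes>\<^bsub>GP\<^esub> cls b = cls (a @ b)"
  by (simp add: graph_product_def mult_cls)
lemma GP_one: "\<one>\<^bsub>GP\<^esub> = cls []" by (simp add: graph_product_def)

definition winv :: "('v \<times> 'g) list \<Rightarrow> ('v \<times> 'g) list" where
  "winv w = rev (map (\<lambda>(v,g). (v, inv\<^bsub>G v\<^esub> g)) w)"

lemma winv_words: "w \<in> W \<Longrightarrow> winv w \<in> W"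
  by (auto simp: winv_def gp_words_def group.inv_closed[OF grp])

lemma winv_Cons: "winv ((v,g)#w) = winv w @ [(v, inv\<^bsub>G v\<^esub> g)]" by (simp add: winv_def)

lemma eq_letter_inv: "v \<in> V \<Longrightarrow> g \<in> carrier (G v) \<Longrightarrow> eqw [(v,g),(v, inv\<^bsub>G v\<^esub> g)] []"
proof -
  assume v: "v \<in> V" and g: "g \<in> carrier (G v)"
  have "eqw ([] @ [(v,g),(v, inv\<^bsub>G v\<^esub> g)] @ []) ([] @ [(v, g \<otimes>\<^bsub>G v\<^esub> inv\<^bsub>G v\<^esub> g)] @ [])"
    by (rule gp_merge) (use v g group.inv_closed[OF grp] in auto)
  moreover have "eqw ([] @ [(v, \<one>\<^bsub>G v\<^esub>)] @ []) ([] @ [])"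
    by (rule gp_unit) (use v in auto)
  ultimately show ?thesis using group.r_inv[OF grp[OF v] g] by (auto intro: eq_trans)
qed

lemma eq_letter_inv': "v \<in> V \<Longrightarrow> g \<in> carrier (G v) \<Longrightarrow> eqw [(v, inv\<^bsub>G v\<^esub> g),(v,g)] []"
proof -
  assume v: "v \<in> V" and g: "g \<in> carrier (G v)"
  have "eqw ([] @ [(v, inv\<^bsub>G v\<^esub> g), (v,g)] @ []) ([] @ [(v, inv\<^bsub>G v\<^esub> g \<otimes>\<^bsub>G v\<^esub> g)] @ [])"
    by (rule gp_merge) (use v g group.inv_closed[OF grp] in auto)
  moreover have "eqw ([] @ [(v, \<one>\<^bsub>G v\<^esub>)] @ []) ([] @ [])"
    by (rule gp_unit) (use v in auto)
  ultimately show ?thesis using group.l_inv[OF grp[OF v] g] by (auto intro: eq_trans)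
qed

lemma eq_w_winv: "w \<in> W \<Longrightarrow> eqw (w @ winv w) []"
proof (induction w)
  case Nil then show ?case by (simp add: winv_def eq_refl)
next
  case (Cons a w)
  obtain v g where a: "a = (v,g)" by (cases a)
  have v: "v \<in> V" and g: "g \<in> carrier (G v)" and w: "w \<in> W" using Cons.prems a by auto
  have "eqw ([(v,g)] @ (w @ winv w) @ [(v, inv\<^bsub>G v\<^esub> g)]) ([(v,g)] @ [] @ [(v, inv\<^bsub>G v\<^esub> g)])"
    by (rule eq_ctxt[OF Cons.IH[OF w]]) (use v g group.inv_closed[OF grp] in auto)
  then have X: "eqw (a # w @ winv (a # w)) [(v,g),(v, inv\<^bsub>G v\<^esub> g)]" by (simp add: a winv_Cons)
  show ?case by (rule eq_trans[OF _ eq_letter_inv[OF v g]]) (use X in simp)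
qed

lemma winv_winv: "w \<in> W \<Longrightarrow> winv (winv w) = w"
  by (induction w) (auto simp: winv_def group.inv_inv[OF grp] gp_words_def rev_map)

lemma eq_winv_w: "w \<in> W \<Longrightarrow> eqw (winv w @ w) []"
  using eq_w_winv[OF winv_words, of w] winv_winv by simp

lemma GP_group: "group GP"
proof (rule groupI)
  show "\<And>x y. x \<in> carrier GP \<Longrightarrow> y \<in> carrier GP \<Longrightarrow> x \<otimes>\<^bsub>GP\<^esub> y \<in> carrier GP"
    by (auto simp: GP_carrier GP_mult)
  show "\<one>\<^bsub>GP\<^esub> \<in> carrier GP" by (auto simp: GP_carrier GP_one)
  show "\<And>x y z. x \<in> carrier GP \<Longrightarrow> y \<in> carrier GP \<Longrightarrow> z \<in> carrier GP \<Longrightarrow>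
     x \<otimes>\<^bsub>GP\<^esub> y \<otimes>\<^bsub>GP\<^esub> z = x \<otimes>\<^bsub>GP\<^esub> (y \<otimes>\<^bsub>GP\<^esub> z)"
    by (auto simp: GP_carrier GP_mult)
  show "\<And>x. x \<in> carrier GP \<Longrightarrow> \<one>\<^bsub>GP\<^esub> \<otimes>\<^bsub>GP\<^esub> x = x"
    by (auto simp: GP_carrier GP_mult GP_one)
  show "\<And>x. x \<in> carrier GP \<Longrightarrow> \<exists>y\<in>carrier GP. y \<otimes>\<^bsub>GP\<^esub> x = \<one>\<^bsub>GP\<^esub>"
  proof -
    fix x assume "x \<in> carrier GP"
    then obtain w where w: "w \<in> W" "x = cls w" by (auto simp: GP_carrier)
    have "cls (winv w) \<otimes>\<^bsub>GP\<^esub> x = cls []"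
      using w by (simp add: GP_mult winv_words cls_eq_iff eq_winv_w)
    then show "\<exists>y\<in>carrier GP. y \<otimes>\<^bsub>GP\<^esub> x = \<one>\<^bsub>GP\<^esub>"
      using w winv_words by (auto simp: GP_carrier GP_one)
  qed
qed

lemma GP_inv: "w \<in> W \<Longrightarrow> inv\<^bsub>GP\<^esub> (cls w) = cls (winv w)"
proof -
  assume w: "w \<in> W"
  have "cls (winv w) \<otimes>\<^bsub>GP\<^esub> cls w = \<one>\<^bsub>GP\<^esub>"
    using w by (simp add: GP_mult winv_words cls_eq_iff eq_winv_w GP_one)
  then show ?thesis using group.inv_equality[OF GP_group] w winv_words by (auto simp: GP_carrier)
qed

lemma GP_pow: "w \<in> W \<Longrightarrow> cls w [^]\<^bsub>GP\<^esub> (n::nat) = cls (concat (replicate n w))"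
proof (induction n)
  case 0 then show ?case by (simp add: GP_one)
next
  case (Suc n)
  have "concat (replicate n w) \<in> W" using Suc.prems by (induction n) auto
  then show ?case using Suc by (simp add: GP_mult replicate_append_same[symmetric] del: replicate_append_same)
qed

lemma concat_rep_words: "w \<in> W \<Longrightarrow> concat (replicate n w) \<in> W"
  by (induction n) auto

end

context gpl begin

fun reach :: "'v \<Rightarrow> ('v \<times> 'g) list \<Rightarrow> bool" where
  "reach v [] = False"
| "reach v ((u,h)#w) = (u = v \<or> (E v u \<and> reach v w))"

definition nt :: "'v \<times> 'g \<Rightarrow> bool" where
  "nt x \<longleftrightarrow> fst x \<in> V \<and> snd x \<in> carrier (G (fst x)) \<and> snd x \<noteq> \<one>\<^bsub>G (fst x)\<^esub>"

fun red :: "('v \<times> 'g) list \<Rightarrow> bool" where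
  "red [] = True"
| "red ((v,g)#w) = (nt (v,g) \<and> \<not> reach v w \<and> red w)"

fun act1 :: "'v \<Rightarrow> 'g \<Rightarrow> ('v \<times> 'g) list \<Rightarrow> ('v \<times> 'g) list" where
  "act1 v g [] = (if g = \<one>\<^bsub>G v\<^esub> then [] else [(v,g)])"
| "act1 v g ((u,h)#w) = (if u = v then (if g \<otimes>\<^bsub>G v\<^esub> h = \<one>\<^bsub>G v\<^esub> then w else (v, g \<otimes>\<^bsub>G v\<^esub> h)#w)
     else if E v u then (u,h) # act1 v g w
     else (if g = \<one>\<^bsub>G v\<^esub> then (u,h)#w else (v,g)#(u,h)#w))"

definition swap1 :: "('v \<times> 'g) list \<Rightarrow> ('v \<times> 'g) list \<Rightarrow> bool" where
  "swap1 w w' \<longleftrightarrow> (\<exists>A a x b y B. E a b \<and> w = A @ (a,x)#(b,y)#B \<and> w' = A @ (b,y)#(a,x)#B)"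

abbreviation "sw \<equiv> swap1\<^sup>*\<^sup>*"

lemma swap1_sym: "swap1 w w' \<Longrightarrow> swap1 w' w"
  unfolding swap1_def using E_sym by blast

lemma sw_sym: "sw w w' \<Longrightarrow> sw w' w"
  by (induction rule: rtranclp_induct) (auto intro: converse_rtranclp_into_rtranclp swap1_sym)

lemma sw_trans: "sw a b \<Longrightarrow> sw b c \<Longrightarrow> sw a c" by (rule rtranclp_trans)

lemma swap1_ctxt: "swap1 a b \<Longrightarrow> swap1 (c @ a @ d) (c @ b @ d)"
  unfolding swap1_def by (metis append.assoc append_Cons)

lemma sw_ctxt: "sw a b \<Longrightarrow> sw (c @ a @ d) (c @ b @ d)"
  by (induction rule: rtranclp_induct) (auto intro: rtranclp.rtrancl_into_rtrancl swap1_ctxt)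

lemma sw_Cons: "sw a b \<Longrightarrow> sw (x # a) (x # b)"
  using sw_ctxt[of a b "[x]" "[]"] by simp

lemma sw_swap: "E a b \<Longrightarrow> sw ((a,x)#(b,y)#B) ((b,y)#(a,x)#B)"
  by (rule r_into_rtranclp) (unfold swap1_def, use append_Nil in blast)

lemma swap1_length: "swap1 a b \<Longrightarrow> length a = length b"
  unfolding swap1_def by auto

lemma sw_length: "sw a b \<Longrightarrow> length a = length b"
  by (induction rule: rtranclp_induct) (auto dest: swap1_length)

lemma act1_swap_base:
  assumes "E a b"
  shows "sw (act1 v g ((a,x)#(b,y)#B)) (act1 v g ((b,y)#(a,x)#B))"
proof -
  have ab: "a \<noteq> b" using assms E_irr by blast
  consider "a = v" | "b = v" | "a \<noteq> v" "b \<noteq> v" by blast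
  then show ?thesis
  proof cases
    case 1
    then have "E v b" using assms by simp
    then show ?thesis using 1 ab by (auto intro: sw_swap simp: E_sym)
  next
    case 2
    then have "E v a" using assms E_sym by simp
    then show ?thesis using 2 ab by (auto intro: sw_swap simp: E_sym)
  next
    case 3
    have s1: "sw ((a,x)#(v,g)#(b,y)#B) ((v,g)#(b,y)#(a,x)#B)" if "E v a"
    proof -
      have "sw ((a,x)#(v,g)#(b,y)#B) ((v,g)#(a,x)#(b,y)#B)" using that by (auto intro: sw_swap simp: E_sym)
      moreover have "sw ((v,g)#(a,x)#(b,y)#B) ((v,g)#(b,y)#(a,x)#B)" using assms by (auto intro: sw_Cons sw_swap)
      ultimately show ?thesis by (rule sw_trans)
    qed
    have s2: "sw ((v,g)#(a,x)#(b,y)#B) ((b,y)#(v,g)#(a,x)#B)" if "E v b"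
    proof -
      have "sw ((v,g)#(a,x)#(b,y)#B) ((v,g)#(b,y)#(a,x)#B)" using assms by (auto intro: sw_Cons sw_swap)
      moreover have "sw ((v,g)#(b,y)#(a,x)#B) ((b,y)#(v,g)#(a,x)#B)" using that by (auto intro: sw_swap)
      ultimately show ?thesis by (rule sw_trans)
    qed
    show ?thesis using 3 s1 s2 assms
      by (cases "E v a"; cases "E v b"; auto intro: sw_Cons sw_swap)
  qed
qed

lemma act1_swap_pre:
  assumes "E a b"
  shows "sw (act1 v g (A @ (a,x)#(b,y)#B)) (act1 v g (A @ (b,y)#(a,x)#B))"
proof (induction A)
  case Nil then show ?case using act1_swap_base[OF assms] by simp
next
  case (Cons c A)
  obtain u h where c: "c = (u,h)" by (cases c)
  have s: "sw (A @ (a,x)#(b,y)#B) (A @ (b,y)#(a,x)#B)"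
    using sw_ctxt[OF sw_swap[OF assms], where c=A and d="[]"] by simp
  show ?case using Cons s unfolding c by (auto intro: sw_Cons)
qed

lemma act1_swap1: "swap1 w w' \<Longrightarrow> sw (act1 v g w) (act1 v g w')"
proof -
  assume "swap1 w w'"
  then obtain A a x b y B where "E a b" "w = A @ (a,x)#(b,y)#B" "w' = A @ (b,y)#(a,x)#B"
    unfolding swap1_def by blast
  then show ?thesis using act1_swap_pre by simp
qed

lemma act1_sw: "sw w w' \<Longrightarrow> sw (act1 v g w) (act1 v g w')"
  by (induction rule: rtranclp_induct) (auto intro: sw_trans act1_swap1)

definition aw :: "('v \<times> 'g) list \<Rightarrow> ('v \<times> 'g) list \<Rightarrow> ('v \<times> 'g) list" where
  "aw xs w = foldr (\<lambda>(v,g) acc. act1 v g acc) xs w"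

lemma aw_Nil[simp]: "aw [] w = w" by (simp add: aw_def)
lemma aw_Cons[simp]: "aw ((v,g)#xs) w = act1 v g (aw xs w)" by (simp add: aw_def)
lemma aw_append: "aw (xs @ ys) w = aw xs (aw ys w)" by (simp add: aw_def)

lemma aw_sw: "sw w w' \<Longrightarrow> sw (aw xs w) (aw xs w')"
proof (induction xs)
  case (Cons a xs) then show ?case by (cases a) (auto intro: act1_sw)
qed simp

lemma reach_act1: "E u v \<Longrightarrow> reach u (act1 v g w) \<Longrightarrow> reach u w"
proof (induction w)
  case Nil then show ?case using E_irr by (auto split: if_splits)
next
  case (Cons c w)
  obtain c1 h where c: "c = (c1,h)" by (cases c)
  show ?case using Cons unfolding c using E_irr by (auto split: if_splits)
qed

lemma red_act1:
  assumes "red w" "v \<in> V" "g \<in> carrier (G v)"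
  shows "red (act1 v g w)"
  using assms
proof (induction w)
  case Nil then show ?case by (auto simp: nt_def)
next
  case (Cons c w)
  obtain u h where c: "c = (u,h)" by (cases c)
  have gr: "group (G v)" using grp Cons.prems by auto
  have hc: "h \<in> carrier (G u)" using Cons.prems c by (auto simp: nt_def)
  show ?case
  proof (cases "u = v")
    case True
    then show ?thesis using Cons.prems c hc by (auto simp: nt_def monoid.m_closed[OF group.is_monoid[OF gr]])
  next
    case False
    show ?thesis
    proof (cases "E v u")
      case True
      have "\<not> reach u (act1 v g w)" using reach_act1[of u v g w] True E_sym Cons.prems c by auto
      then show ?thesis using Cons c True False by auto
    next
      case F2: False
      then show ?thesis using Cons.prems c False by (auto simp: nt_def)
    qed
  qed
qed

lemma act1_noreach:
  assumes "\<not> reach v w"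
  shows "sw (act1 v g w) (if g = \<one>\<^bsub>G v\<^esub> then w else (v,g)#w)"
  using assms
proof (induction w)
  case (Cons c w)
  obtain u h where c: "c = (u,h)" by (cases c)
  have uv: "u \<noteq> v" using Cons.prems c by auto
  show ?case
  proof (cases "E v u")
    case True
    then have nr: "\<not> reach v w" using Cons.prems c by auto
    have a: "sw (act1 v g (c#w)) ((u,h) # (if g = \<one>\<^bsub>G v\<^esub> then w else (v,g)#w))"
      using Cons.IH[OF nr] uv True c by (auto intro: sw_Cons)
    have b: "sw ((u,h)#(v,g)#w) ((v,g)#(u,h)#w)" using True E_sym by (auto intro: sw_swap)
    show ?thesis using a b c by (auto split: if_splits intro: sw_trans)
  next
    case False then show ?thesis using uv c by auto
  qed
qed auto

lemma act1_merge:
  assumes "red w" "v \<in> V" "g \<in> carrier (G v)" "h \<in> carrier (G v)"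
  shows "sw (act1 v g (act1 v h w)) (act1 v (g \<otimes>\<^bsub>G v\<^esub> h) w)"
  using assms
proof (induction w)
  case Nil
  have gr: "group (G v)" using grp Nil by auto
  show ?case using Nil by (auto simp: group.is_monoid[OF gr] monoid.r_one[OF group.is_monoid[OF gr]])
next
  case (Cons c w)
  obtain u k where c: "c = (u,k)" by (cases c)
  have gr: "group (G v)" using grp Cons.prems by auto
  note M = group.is_monoid[OF gr]
  show ?case
  proof (cases "u = v")
    case True
    have k: "k \<in> carrier (G v)" and nr: "\<not> reach v w" using Cons.prems c True by (auto simp: nt_def)
    have assoc: "g \<otimes>\<^bsub>G v\<^esub> (h \<otimes>\<^bsub>G v\<^esub> k) = g \<otimes>\<^bsub>G v\<^esub> h \<otimes>\<^bsub>G v\<^esub> k"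
      using Cons.prems k by (simp add: monoid.m_assoc[OF M])
    show ?thesis
    proof (cases "h \<otimes>\<^bsub>G v\<^esub> k = \<one>\<^bsub>G v\<^esub>")
      case hk: True
      then have "g \<otimes>\<^bsub>G v\<^esub> h \<otimes>\<^bsub>G v\<^esub> k = g" using assoc Cons.prems by (simp add: monoid.r_one[OF M])
      then show ?thesis using hk True c act1_noreach[OF nr, of g] by auto
    next
      case False
      then show ?thesis using True c assoc by auto
    qed
  next
    case False
    show ?thesis
    proof (cases "E v u")
      case True
      then have "red w" using Cons.prems c by auto
      then show ?thesis using Cons.IH Cons.prems True False c by (auto intro: sw_Cons)
    next
      case F2: False
      have "g \<otimes>\<^bsub>G v\<^esub> \<one>\<^bsub>G v\<^esub> = g" using Cons.prems by (simp add: monoid.r_one[OF M])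
      then show ?thesis using F2 False c by auto
    qed
  qed
qed

lemma act1_one:
  assumes "red w" "v \<in> V"
  shows "act1 v \<one>\<^bsub>G v\<^esub> w = w"
  using assms
proof (induction w)
  case (Cons c w)
  obtain u k where c: "c = (u,k)" by (cases c)
  have gr: "group (G v)" using grp Cons.prems by auto
  show ?case using Cons c by (auto simp: nt_def monoid.l_one[OF group.is_monoid[OF gr]])
qed simp

lemma act1_comm:
  assumes "E u v"
  shows "sw (act1 u g (act1 v h w)) (act1 v h (act1 u g w))"
proof (induction w)
  case Nil
  have "E v u" using assms E_sym by auto
  then show ?case using assms E_irr by (auto intro: sw_swap)
next
  case (Cons c w)
  obtain c1 k where c: "c = (c1,k)" by (cases c)
  have uv: "u \<noteq> v" using assms E_irr by auto
  have vu: "E v u" using assms E_sym by auto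
  consider "c1 = v" | "c1 = u" | "c1 \<noteq> u" "c1 \<noteq> v" by blast
  then show ?case
  proof cases
    case 1 then show ?thesis using c uv assms vu by auto
  next
    case 2 then show ?thesis using c uv assms vu by auto
  next
    case 3
    show ?thesis using 3 c uv assms vu Cons.IH
      by (cases "E u c1"; cases "E v c1"; auto intro: sw_Cons sw_swap)
  qed
qed

lemma red_aw: "red w \<Longrightarrow> xs \<in> W \<Longrightarrow> red (aw xs w)"
proof (induction xs)
  case (Cons a xs) then show ?case by (cases a) (auto intro: red_act1)
qed simp

lemma eq_aw: "eqw x y \<Longrightarrow> red w \<Longrightarrow> sw (aw x w) (aw y w)"
proof (induction arbitrary: w rule: gp_eq.induct)
  case (gp_sym w1 w2) then show ?case using sw_sym by blast
next
  case (gp_trans w1 w2 w3) then show ?case using sw_trans by blast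
next
  case (gp_unit xs ys v)
  have "red (aw ys w)" using gp_unit red_aw by auto
  then show ?case using gp_unit by (simp add: aw_append act1_one)
next
  case (gp_merge xs ys v g h)
  have "red (aw ys w)" using gp_merge red_aw by auto
  then have "sw (act1 v g (act1 v h (aw ys w))) (act1 v (g \<otimes>\<^bsub>G v\<^esub> h) (aw ys w))"
    using act1_merge gp_merge by auto
  then show ?case by (simp add: aw_append aw_sw)
next
  case (gp_comm xs ys u v g h)
  have "sw (act1 u g (act1 v h (aw ys w))) (act1 v h (act1 u g (aw ys w)))"
    using act1_comm gp_comm by auto
  then show ?case by (simp add: aw_append aw_sw)
qed simp

lemma red_Cons_D: "red (x # w) \<Longrightarrow> red w" by (cases x) auto

lemma aw_red: "red r \<Longrightarrow> sw (aw r []) r"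
proof (induction r)
  case (Cons x r)
  obtain v g where x: "x = (v,g)" by (cases x)
  have r: "red r" and nr: "\<not> reach v r" and g1: "g \<noteq> \<one>\<^bsub>G v\<^esub>" using Cons.prems x by (auto simp: nt_def)
  have "sw (act1 v g (aw r [])) (act1 v g r)" using act1_sw[OF Cons.IH[OF r]] .
  moreover have "sw (act1 v g r) ((v,g)#r)" using act1_noreach[OF nr, of g] g1 by simp
  ultimately show ?case using x by (auto intro: sw_trans)
qed simp

lemma red_words: "red r \<Longrightarrow> r \<in> W"
proof (induction r)
  case (Cons x r) then show ?case by (cases x) (auto simp: nt_def)
qed simp

theorem normal_form: "red r1 \<Longrightarrow> red r2 \<Longrightarrow> eqw r1 r2 \<Longrightarrow> sw r1 r2"
proof -
  assume r1: "red r1" and r2: "red r2" and e: "eqw r1 r2"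
  have "sw (aw r1 []) (aw r2 [])" using eq_aw[OF e] by simp
  then show ?thesis using aw_red[OF r1] aw_red[OF r2] by (meson sw_sym sw_trans)
qed

end

context gpl begin

abbreviation verts :: "('v \<times> 'g) list \<Rightarrow> 'v set" where "verts w \<equiv> fst ` set w"
definition adjall :: "'v \<Rightarrow> ('v \<times> 'g) list \<Rightarrow> bool" where
  "adjall v w \<longleftrightarrow> (\<forall>u\<in>verts w. E v u)"

lemma adjall_simps[simp]: "adjall v []" "adjall v ((u,h)#w) \<longleftrightarrow> E v u \<and> adjall v w"
  "adjall v (p @ q) \<longleftrightarrow> adjall v p \<and> adjall v q" "adjall v (rev p) \<longleftrightarrow> adjall v p"
  by (auto simp: adjall_def)

lemma reach_app: "reach v (p @ q) \<longleftrightarrow> reach v p \<or> (adjall v p \<and> reach v q)"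
proof (induction p)
  case (Cons x p) then show ?case by (cases x) (auto simp: E_irr)
qed simp

lemma reach_verts: "reach v w \<Longrightarrow> v \<in> verts w"
proof (induction w)
  case (Cons x w) then show ?case by (cases x) auto
qed simp

lemma adjall_notin: "adjall v w \<Longrightarrow> v \<notin> verts w"
  using E_irr by (auto simp: adjall_def)

lemma red_app: "red (p @ q) \<longleftrightarrow> red p \<and> red q \<and> (\<forall>v. reach v (rev p) \<longrightarrow> \<not> reach v q)"
proof (induction p)
  case (Cons x p)
  obtain v g where x: "x = (v,g)" by (cases x)
  have r: "reach u (rev (x#p)) \<longleftrightarrow> reach u (rev p) \<or> (adjall u p \<and> u = v)" for u
    using x by (auto simp: reach_app)
  show ?case using Cons.IH unfolding x r by (auto simp: reach_app)
qed simp

lemma reach_split: "reach v w \<Longrightarrow> \<exists>p h q. w = p @ (v,h) # q \<and> adjall v p"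
proof (induction w)
  case (Cons x w)
  obtain u k where x: "x = (u,k)" by (cases x)
  show ?case
  proof (cases "u = v")
    case True then show ?thesis using x by (intro exI[of _ "[]"]) auto
  next
    case False
    then have "E v u" "reach v w" using Cons.prems x by auto
    then obtain p h q where "w = p @ (v,h) # q" "adjall v p" using Cons.IH by blast
    then show ?thesis using x \<open>E v u\<close> by (intro exI[of _ "(u,k)#p"]) auto
  qed
qed simp

lemma move_left: "adjall v p \<Longrightarrow> p \<in> W \<Longrightarrow> v \<in> V \<Longrightarrow> h \<in> carrier (G v) \<Longrightarrow>
   eqw (p @ [(v,h)]) ((v,h) # p)"
proof (induction p)
  case Nil then show ?case by (auto intro: eq_refl)
next
  case (Cons x p)
  obtain u k where x: "x = (u,k)" by (cases x)
  have IH: "eqw (p @ [(v,h)]) ((v,h) # p)" using Cons x by auto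
  have a: "eqw ([(u,k)] @ (p @ [(v,h)]) @ []) ([(u,k)] @ ((v,h) # p) @ [])"
    by (rule eq_ctxt[OF IH]) (use Cons.prems x in auto)
  have b: "eqw ([] @ [(u,k), (v,h)] @ p) ([] @ [(v,h), (u,k)] @ p)"
    by (rule gp_comm) (use Cons.prems x E_sym E_V in auto)
  show ?case using eq_trans[OF a] b x by simp
qed

lemma step_shorter: "w \<in> W \<Longrightarrow> \<not> red w \<Longrightarrow> \<exists>w'. eqw w w' \<and> length w' < length w \<and> verts w' \<subseteq> verts w"
proof (induction w)
  case Nil then show ?case by simp
next
  case (Cons x w)
  obtain v g where x: "x = (v,g)" by (cases x)
  have v: "v \<in> V" and g: "g \<in> carrier (G v)" and w: "w \<in> W" using Cons.prems x by auto
  consider "g = \<one>\<^bsub>G v\<^esub>" | "reach v w" | "\<not> red w" using Cons.prems x v g by (auto simp: nt_def)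
  then show ?case
  proof cases
    case 1
    have "eqw ([] @ [(v, \<one>\<^bsub>G v\<^esub>)] @ w) ([] @ w)" by (rule gp_unit) (use v w in auto)
    then show ?thesis using 1 x by (intro exI[of _ w]) auto
  next
    case 2
    then obtain p h q where pq: "w = p @ (v,h) # q" "adjall v p" using reach_split by blast
    have p: "p \<in> W" and h: "h \<in> carrier (G v)" and q: "q \<in> W" using w pq by auto
    have a: "eqw ([(v,g)] @ (p @ [(v,h)]) @ q) ([(v,g)] @ ((v,h) # p) @ q)"
      by (rule eq_ctxt[OF move_left[OF pq(2) p v h]]) (use v g q in auto)
    have b: "eqw ([] @ [(v,g),(v,h)] @ (p @ q)) ([] @ [(v, g \<otimes>\<^bsub>G v\<^esub> h)] @ (p @ q))"
      by (rule gp_merge) (use v g h p q in auto)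
    have "eqw (x # w) ((v, g \<otimes>\<^bsub>G v\<^esub> h) # p @ q)" using eq_trans[OF a] b x pq by simp
    then show ?thesis using pq x by (intro exI[of _ "(v, g \<otimes>\<^bsub>G v\<^esub> h) # p @ q"]) auto
  next
    case 3
    then obtain w' where w': "eqw w w'" "length w' < length w" "verts w' \<subseteq> verts w" using Cons.IH w by blast
    have "eqw ([x] @ w @ []) ([x] @ w' @ [])" by (rule eq_ctxt[OF w'(1)]) (use Cons.prems in auto)
    then show ?thesis using w' by (intro exI[of _ "x # w'"]) auto
  qed
qed

lemma exists_red: "w \<in> W \<Longrightarrow> \<exists>r. red r \<and> eqw w r \<and> length r \<le> length w \<and> verts r \<subseteq> verts w"
proof (induction "length w" arbitrary: w rule: less_induct)
  case less
  show ?case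
  proof (cases "red w")
    case True then show ?thesis using less.prems by (auto intro: eq_refl)
  next
    case False
    then obtain w' where w': "eqw w w'" "length w' < length w" "verts w' \<subseteq> verts w"
      using step_shorter less.prems by blast
    then obtain r where "red r" "eqw w' r" "length r \<le> length w'" "verts r \<subseteq> verts w'"
      using less.hyps[of w'] eq_words by blast
    then show ?thesis using w' by (intro exI[of _ r]) (auto intro: eq_trans)
  qed
qed

lemma core:
  assumes "red (z @ y)" "\<not> red (y @ z)" "eqw (z @ y) (y @ z)"
  shows False
proof -
  have yz: "y @ z \<in> W" using eq_words[OF assms(3)] by auto
  obtain w' where w': "eqw (y @ z) w'" "length w' < length (y @ z)"
    using step_shorter[OF yz assms(2)] by blast
  obtain r where r: "red r" "eqw w' r" "length r \<le> length w'" using exists_red eq_words[OF w'(1)] by blast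
  have "eqw (z @ y) r" using assms(3) w'(1) r(2) by (blast intro: eq_trans)
  then have "length (z @ y) = length r" using normal_form[OF assms(1) r(1)] sw_length by blast
  then show False using w' r by simp
qed

lemma swap1_indep: "swap1 w w' \<Longrightarrow> \<forall>a\<in>verts w. \<forall>b\<in>verts w. \<not> E a b \<Longrightarrow> False"
  unfolding swap1_def by fastforce

lemma sw_indep: "sw w w' \<Longrightarrow> \<forall>a\<in>verts w. \<forall>b\<in>verts w. \<not> E a b \<Longrightarrow> w' = w"
proof (induction rule: rtranclp_induct)
  case (step y z) then show ?case using swap1_indep by blast
qed simp

definition pw :: "('v \<times> 'g) list \<Rightarrow> nat \<Rightarrow> ('v \<times> 'g) list" where
  "pw h M = concat (replicate M h)"

lemma pw_Suc: "pw h (Suc M) = h @ pw h M" by (simp add: pw_def)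
lemma pw_Suc': "pw h (Suc M) = pw h M @ h" by (simp add: pw_def replicate_append_same[symmetric] del: replicate_append_same)
lemma pw_words: "h \<in> W \<Longrightarrow> pw h M \<in> W" by (simp add: pw_def concat_rep_words)
lemma verts_pw: "M \<ge> 1 \<Longrightarrow> verts (pw h M) = verts h"
  by (induction M) (auto simp: pw_def)

lemma reach_pw: "M \<ge> 1 \<Longrightarrow> v \<in> verts h \<Longrightarrow> reach v (pw h M) \<longleftrightarrow> reach v h"
proof (cases M)
  case (Suc k)
  assume "v \<in> verts h"
  then have "\<not> adjall v h" using adjall_notin by blast
  then show ?thesis using Suc by (simp add: pw_Suc reach_app)
qed simp

lemma reach_rev_pw: "M \<ge> 1 \<Longrightarrow> v \<in> verts h \<Longrightarrow> reach v (rev (pw h M)) \<longleftrightarrow> reach v (rev h)"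
proof (cases M)
  case (Suc k)
  assume "v \<in> verts h"
  then have "\<not> adjall v h" using adjall_notin by blast
  then show ?thesis using Suc by (simp add: pw_Suc' reach_app)
qed simp

lemma red_pw:
  assumes "red h" "\<forall>v. reach v (rev h) \<longrightarrow> \<not> reach v h"
  shows "red (pw h M)"
proof (induction M)
  case 0 then show ?case by (simp add: pw_def)
next
  case (Suc M)
  show ?case
  proof (cases M)
    case 0 then show ?thesis using assms by (simp add: pw_def)
  next
    case (Suc k)
    have "\<forall>v. reach v (rev h) \<longrightarrow> \<not> reach v (pw h M)"
      using assms(2) reach_pw[of M] reach_verts Suc by (metis le_add1 plus_1_eq_Suc set_rev image_set)
    then show ?thesis using Suc.IH assms(1) by (simp add: pw_Suc red_app)
  qed
qed

lemma red_distinct: "distinct (map fst h) \<Longrightarrow> \<forall>x\<in>set h. nt x \<Longrightarrow> red h"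
proof (induction h)
  case (Cons x h)
  obtain v g where x: "x = (v,g)" by (cases x)
  have "\<not> reach v h" using reach_verts Cons.prems x by force
  then show ?case using Cons x by auto
qed simp

lemma reach_both_cone:
  assumes "distinct (map fst h)" "reach v h" "reach v (rev h)" "u \<in> verts h" "u \<noteq> v"
  shows "E v u"
proof -
  obtain p g q where pq: "h = p @ (v,g) # q" "adjall v p" using reach_split[OF assms(2)] by blast
  have "v \<notin> verts q" using assms(1) pq(1) by auto
  then have nr: "\<not> reach v (rev q)" using reach_verts by fastforce
  have "reach v (rev q @ (v,g) # rev p)" using assms(3) pq(1) by simp
  then have "adjall v q" using nr by (simp add: reach_app)
  then show ?thesis using pq assms(4,5) by (auto simp: adjall_def)
qed

lemma cone_ex:
  assumes "irreducible_sub E L" "v \<in> L" "u \<in> L" "u \<noteq> v"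
  shows "\<exists>w\<in>L. w \<noteq> v \<and> \<not> E v w"
proof (rule ccontr)
  assume "\<not> ?thesis"
  then have "\<forall>a\<in>{v}. \<forall>b\<in>L - {v}. E a b" by auto
  moreover have "{v} \<union> (L - {v}) = L" "{v} \<inter> (L - {v}) = {}" "L - {v} \<noteq> {}" using assms by auto
  ultimately show False using assms(1) unfolding irreducible_sub_def
    by (metis empty_not_insert)
qed

lemma reach_clique: "reach u w \<Longrightarrow> reach v w \<Longrightarrow> u \<noteq> v \<Longrightarrow> E u v"
proof (induction w)
  case (Cons x w)
  obtain c k where x: "x = (c,k)" by (cases x)
  consider "u = c" | "v = c" | "u \<noteq> c" "v \<noteq> c" by blast
  then show ?case
  proof cases
    case 1 then show ?thesis using Cons.prems x E_sym by auto
  next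
    case 2 then show ?thesis using Cons.prems x by auto
  next
    case 3 then show ?thesis using Cons x by auto
  qed
qed simp

end

context gpl begin

definition sel :: "'v \<Rightarrow> 'g" where
  "sel v = (SOME x. x \<in> carrier (G v) \<and> x \<noteq> \<one>\<^bsub>G v\<^esub>)"

definition lett :: "'v list \<Rightarrow> ('v \<times> 'g) list" where
  "lett xs = map (\<lambda>v. (v, sel v)) xs"

lemma lett_simps[simp]: "lett [] = []" "lett (v#xs) = (v, sel v) # lett xs"
  "lett (xs @ ys) = lett xs @ lett ys" "rev (lett xs) = lett (rev xs)"
  "map fst (lett xs) = xs" "set (lett xs) = (\<lambda>v. (v, sel v)) ` set xs"
  by (auto simp: lett_def rev_map image_image comp_def)

lemma verts_lett[simp]: "verts (lett xs) = set xs" by (auto simp: image_image)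

lemma sel_nt: "v \<in> V \<Longrightarrow> \<exists>x\<in>carrier (G v). x \<noteq> \<one>\<^bsub>G v\<^esub> \<Longrightarrow> nt (v, sel v)"
  unfolding sel_def nt_def by (metis (mono_tags, lifting) fst_conv snd_conv someI_ex)

lemma hcontra:
  assumes irr: "irreducible_sub E L" and c2: "\<exists>a\<in>L. \<exists>b\<in>L. a \<noteq> b"
    and z: "red z" "verts z \<subseteq> L"
    and comm: "\<exists>M\<ge>1. eqw (z @ pw h M) (pw h M @ z)"
    and h: "distinct (map fst h)" "\<forall>x\<in>set h. nt x" "verts h = L"
    and f: "\<exists>f. reach f (rev h) \<and> reach f z"
    and nr: "\<forall>v. reach v (rev z) \<longrightarrow> \<not> reach v h"
  shows False
proof -
  have rh: "red h" using red_distinct h by blast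
  have hW: "h \<in> W" using red_words[OF rh] .
  have ov: "\<forall>v. reach v (rev h) \<longrightarrow> \<not> reach v h"
  proof (intro allI impI notI)
    fix v assume a: "reach v (rev h)" "reach v h"
    have vL: "v \<in> L" using reach_verts[OF a(2)] h by auto
    obtain w where w: "w \<in> L" "w \<noteq> v" "\<not> E v w" using cone_ex[OF irr vL] c2 by metis
    show False using reach_both_cone[OF h(1) a(2) a(1), of w] w h by auto
  qed
  obtain M where M: "M \<ge> 1" "eqw (z @ pw h M) (pw h M @ z)" using comm by blast
  have ry: "red (pw h M)" using red_pw[OF rh ov] .
  have "red (z @ pw h M)"
  proof -
    have "\<forall>v. reach v (rev z) \<longrightarrow> \<not> reach v (pw h M)"
    proof (intro allI impI)
      fix v assume a: "reach v (rev z)"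
      then have "v \<in> verts h" using reach_verts[OF a] z h by auto
      then show "\<not> reach v (pw h M)" using reach_pw[OF M(1)] nr a by blast
    qed
    then show ?thesis using z ry by (simp add: red_app)
  qed
  moreover have "\<not> red (pw h M @ z)"
  proof -
    obtain f where f: "reach f (rev h)" "reach f z" using f by blast
    have "f \<in> verts h" using reach_verts[OF f(1)] by auto
    then have "reach f (rev (pw h M))" using reach_rev_pw[OF M(1)] f by blast
    then show ?thesis using f by (auto simp: red_app)
  qed
  ultimately show False using core M(2) by blast
qed

lemma hcontra2:
  assumes irr: "irreducible_sub E L" and c2: "\<exists>a\<in>L. \<exists>b\<in>L. a \<noteq> b"
    and z: "red z" "verts z \<subseteq> L"
    and comm: "\<exists>M\<ge>1. eqw (z @ pw h M) (pw h M @ z)"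
    and h: "distinct (map fst h)" "\<forall>x\<in>set h. nt x" "verts h = L"
    and f: "\<exists>l. reach l (rev z) \<and> reach l h"
    and nr: "\<forall>v. reach v (rev h) \<longrightarrow> \<not> reach v z"
  shows False
proof -
  have rh: "red h" using red_distinct h by blast
  have ov: "\<forall>v. reach v (rev h) \<longrightarrow> \<not> reach v h"
  proof (intro allI impI notI)
    fix v assume a: "reach v (rev h)" "reach v h"
    have vL: "v \<in> L" using reach_verts[OF a(2)] h by auto
    obtain w where w: "w \<in> L" "w \<noteq> v" "\<not> E v w" using cone_ex[OF irr vL] c2 by metis
    show False using reach_both_cone[OF h(1) a(2) a(1), of w] w h by auto
  qed
  obtain M where M: "M \<ge> 1" "eqw (z @ pw h M) (pw h M @ z)" using comm by blast
  have ry: "red (pw h M)" using red_pw[OF rh ov] .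
  have "red (pw h M @ z)"
  proof -
    have "\<forall>v. reach v (rev (pw h M)) \<longrightarrow> \<not> reach v z"
    proof (intro allI impI)
      fix v assume a: "reach v (rev (pw h M))"
      then have "v \<in> verts h" using reach_verts[OF a] verts_pw[OF M(1)] by auto
      then show "\<not> reach v z" using reach_rev_pw[OF M(1)] nr a by blast
    qed
    then show ?thesis using z ry by (simp add: red_app)
  qed
  moreover have "\<not> red (z @ pw h M)"
  proof -
    obtain l where l: "reach l (rev z)" "reach l h" using f by blast
    have "l \<in> verts h" using reach_verts[OF l(2)] by auto
    then have "reach l (pw h M)" using reach_pw[OF M(1)] l by blast
    then show ?thesis using l by (auto simp: red_app)
  qed
  ultimately show False using core eq_sym[OF M(2)] by blast
qed

lemma shape:
  assumes irr: "irreducible_sub E L" and c2: "\<exists>a\<in>L. \<exists>b\<in>L. a \<noteq> b"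
    and as: "set as = L - S - {f}" and bs: "set bs = S - {f}" and fL: "f \<in> L"
    and cond: "\<forall>l\<in>S-{f}. \<exists>u\<in>L-S-{f}. \<not> E l u" and vS: "v \<in> S"
  shows "\<not> reach v (lett (as @ bs @ [f]))"
proof
  assume r: "reach v (lett (as @ bs @ [f]))"
  show False
  proof (cases "v = f")
    case True
    obtain w where w: "w \<in> L" "w \<noteq> f" "\<not> E f w" using cone_ex[OF irr fL] c2 by metis
    have "f \<notin> set as" "f \<notin> set bs" using as bs by auto
    moreover have n1: "\<not> reach f (lett as)" "\<not> reach f (lett bs)"
      using reach_verts[of f "lett as"] reach_verts[of f "lett bs"] calculation by auto
    ultimately have "adjall f (lett as)" "adjall f (lett bs)" using r True
      by (auto simp: reach_app)
    then show False using w as bs by (auto simp: adjall_def)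
  next
    case False
    then obtain u where u: "u \<in> L - S - {f}" "\<not> E v u" using cond vS by blast
    have "v \<notin> set as" using as vS by auto
    moreover have "\<not> reach v (lett as)" using reach_verts[of v "lett as"] calculation by auto
    ultimately have "adjall v (lett as)" using r by (auto simp: reach_app)
    then show False using u as by (auto simp: adjall_def)
  qed
qed


lemma nt_words: "\<forall>x\<in>set h. nt x \<Longrightarrow> h \<in> W"
  by (auto simp: gp_words_def nt_def)

lemma verts_rev[simp]: "verts (rev z) = verts z" by simp

lemma irred_block:
  assumes LV: "L \<subseteq> V" and irr: "irreducible_sub E L" and c2: "\<exists>a\<in>L. \<exists>b\<in>L. a \<noteq> b"
    and ntr: "\<forall>v\<in>L. \<exists>x\<in>carrier (G v). x \<noteq> \<one>\<^bsub>G v\<^esub>"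
    and two: "\<forall>c d. L = {c,d} \<longrightarrow> c \<noteq> d \<longrightarrow> (\<exists>v\<in>{c,d}. \<exists>x\<in>carrier (G v). \<exists>y\<in>carrier (G v).
                 x \<noteq> \<one>\<^bsub>G v\<^esub> \<and> y \<noteq> \<one>\<^bsub>G v\<^esub> \<and> x \<noteq> y)"
    and z: "red z" "verts z \<subseteq> L" "z \<noteq> []"
    and comm: "\<forall>h\<in>W. verts h \<subseteq> L \<longrightarrow> (\<exists>M\<ge>1. eqw (z @ pw h M) (pw h M @ z))"
  shows False
proof -
  have finL: "finite L" using LV finV finite_subset by blast
  define F where "F = {v. reach v z}"
  define Lz where "Lz = {v. reach v (rev z)}"
  have FL: "F \<subseteq> L" using reach_verts z(2) by (force simp: F_def)
  have LzL: "Lz \<subseteq> L" using reach_verts[of _ "rev z"] z(2) by (force simp: Lz_def)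
  obtain c k z' where zc: "z = (c,k)#z'" using z(3) by (metis list.exhaust prod.exhaust)
  have cF: "c \<in> F" using zc by (simp add: F_def)
  obtain d k' z'' where zd: "rev z = (d,k')#z''" using z(3) by (metis list.exhaust prod.exhaust rev_is_Nil_conv)
  have dLz: "d \<in> Lz" using zd by (simp add: Lz_def)
  have Fcl: "\<forall>a\<in>F. \<forall>b\<in>F. a \<noteq> b \<longrightarrow> E a b" using reach_clique by (auto simp: F_def)
  have Lcl: "\<forall>a\<in>Lz. \<forall>b\<in>Lz. a \<noteq> b \<longrightarrow> E a b" using reach_clique by (auto simp: Lz_def)
  have ntL: "\<forall>v\<in>L. nt (v, sel v)" using sel_nt LV ntr by auto
  have lnt: "\<forall>x\<in>set (lett xs). nt x" if "set xs \<subseteq> L" for xs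
    using that ntL by (auto simp: lett_def)
  have commh: "\<exists>M\<ge>1. eqw (z @ pw h M) (pw h M @ z)" if "\<forall>x\<in>set h. nt x" "verts h \<subseteq> L" for h
    using comm nt_words that by blast
  have caseA: False if A: "\<exists>f\<in>F. \<forall>l\<in>Lz-{f}. \<exists>u\<in>L-Lz-{f}. \<not> E l u"
  proof -
    obtain f where f: "f \<in> F" "\<forall>l\<in>Lz-{f}. \<exists>u\<in>L-Lz-{f}. \<not> E l u" using A by blast
    obtain as where as: "set as = L - Lz - {f}" "distinct as" using finite_distinct_list[of "L - Lz - {f}"] finL by blast
    obtain bs where bs: "set bs = Lz - {f}" "distinct bs" using finite_distinct_list[of "Lz - {f}"] finL LzL finite_subset by blast
    define h where "h = lett (as @ bs @ [f])"
    have fL: "f \<in> L" using f FL by auto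
    have hd: "distinct (map fst h)" using as bs by (auto simp: h_def)
    have hv: "verts h = L" using as bs fL LzL by (auto simp: h_def image_Un image_image)
    have hn: "\<forall>x\<in>set h. nt x" using lnt[of "as @ bs @ [f]"] as bs fL LzL by (auto simp: h_def)
    have r1: "reach f (rev h)" by (simp add: h_def)
    have r2: "reach f z" using f by (simp add: F_def)
    have nr: "\<forall>v. reach v (rev z) \<longrightarrow> \<not> reach v h"
      using shape[OF irr c2 as(1) bs(1) fL f(2)] by (auto simp: h_def Lz_def)
    show False using hcontra[OF irr c2 z(1,2) commh[OF hn equalityD1[OF hv]] hd hn hv _ nr] r1 r2 hv by blast
  qed
  have caseB: False if B: "\<exists>l\<in>Lz. \<forall>f\<in>F-{l}. \<exists>u\<in>L-F-{l}. \<not> E f u"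
  proof -
    obtain l where l: "l \<in> Lz" "\<forall>f\<in>F-{l}. \<exists>u\<in>L-F-{l}. \<not> E f u" using B by blast
    obtain as where as: "set as = L - F - {l}" "distinct as" using finite_distinct_list[of "L - F - {l}"] finL by blast
    obtain bs where bs: "set bs = F - {l}" "distinct bs" using finite_distinct_list[of "F - {l}"] finL FL finite_subset by blast
    define h where "h = lett (l # rev bs @ rev as)"
    have lL: "l \<in> L" using l LzL by auto
    have rh: "rev h = lett (as @ bs @ [l])" by (simp add: h_def)
    have hd: "distinct (map fst h)" using as bs by (auto simp: h_def)
    have hv: "verts h = L" using as bs lL FL by (auto simp: h_def image_Un image_image)
    have hn: "\<forall>x\<in>set h. nt x" using lnt[of "l # rev bs @ rev as"] as bs lL FL by (auto simp: h_def)
    have r1: "reach l h" by (simp add: h_def)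
    have r2: "reach l (rev z)" using l by (simp add: Lz_def)
    have nr: "\<forall>v. reach v (rev h) \<longrightarrow> \<not> reach v z"
      using shape[OF irr c2 as(1) bs(1) lL l(2)] unfolding rh by (auto simp: F_def)
    show False using hcontra2[OF irr c2 z(1,2) commh[OF hn equalityD1[OF hv]] hd hn hv _ nr] r1 r2 by blast
  qed
  have nA: "\<forall>f\<in>F. \<exists>l\<in>Lz-{f}. \<forall>u\<in>L-Lz-{f}. E l u"
  proof (intro ballI)
    fix f assume fF: "f \<in> F"
    show "\<exists>l\<in>Lz-{f}. \<forall>u\<in>L-Lz-{f}. E l u"
    proof (rule ccontr)
      assume "\<not> ?thesis"
      then have "\<forall>l\<in>Lz-{f}. \<exists>u\<in>L-Lz-{f}. \<not> E l u" by blast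
      then show False using caseA fF by blast
    qed
  qed
  have nB: "\<forall>l\<in>Lz. \<exists>f\<in>F-{l}. \<forall>u\<in>L-F-{l}. E f u"
  proof (intro ballI)
    fix l assume lF: "l \<in> Lz"
    show "\<exists>f\<in>F-{l}. \<forall>u\<in>L-F-{l}. E f u"
    proof (rule ccontr)
      assume "\<not> ?thesis"
      then have "\<forall>f\<in>F-{l}. \<exists>u\<in>L-F-{l}. \<not> E f u" by blast
      then show False using caseB lF by blast
    qed
  qed
  obtain l where l: "l \<in> Lz" "l \<noteq> c" "\<forall>u\<in>L-Lz-{c}. E l u" using nA cF by blast
  have lL: "l \<in> L" using l LzL by auto
  have cL: "c \<in> L" using cF FL by auto
  have ladj: "\<forall>u\<in>L. u \<noteq> l \<longrightarrow> u \<noteq> c \<longrightarrow> E l u"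
  proof (intro ballI impI)
    fix u assume u: "u \<in> L" "u \<noteq> l" "u \<noteq> c"
    show "E l u"
    proof (cases "u \<in> Lz")
      case True then show ?thesis using Lcl[rule_format, OF l(1) True] u(2) by auto
    next
      case False then show ?thesis using l(3) u by auto
    qed
  qed
  have nlc: "\<not> E l c"
  proof
    assume "E l c"
    obtain w where "w \<in> L" "w \<noteq> l" "\<not> E l w" using cone_ex[OF irr lL] c2 by metis
    then show False using ladj \<open>E l c\<close> by (cases "w = c") auto
  qed
  obtain f' where f': "f' \<in> F" "f' \<noteq> l" "\<forall>u\<in>L-F-{l}. E f' u" using nB[rule_format, OF l(1)] by auto
  have f'L: "f' \<in> L" using f' FL by auto
  have fadj: "\<forall>u\<in>L. u \<noteq> f' \<longrightarrow> u \<noteq> l \<longrightarrow> E f' u"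
  proof (intro ballI impI)
    fix u assume u: "u \<in> L" "u \<noteq> f'" "u \<noteq> l"
    show "E f' u"
    proof (cases "u \<in> F")
      case True then show ?thesis using Fcl[rule_format, OF f'(1) True] u(2) by auto
    next
      case False then show ?thesis using f'(3) u by auto
    qed
  qed
  have ff: "f' = c"
  proof (rule ccontr)
    assume ne: "f' \<noteq> c"
    have Elf: "E l f'" using ladj[rule_format, OF f'L] f'(2) ne by auto
    obtain w where w: "w \<in> L" "w \<noteq> f'" "\<not> E f' w" using cone_ex[OF irr f'L] c2 by metis
    have "w = l"
    proof (rule ccontr)
      assume "w \<noteq> l" then show False using fadj[rule_format, OF w(1) w(2)] w(3) by auto
    qed
    then show False using Elf w(3) E_sym by auto
  qed
  have Lcl2: "L = {c, l}"
  proof (rule ccontr)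
    assume "L \<noteq> {c,l}"
    then have ne: "L - {c,l} \<noteq> {}" using cL lL by auto
    have j: "\<forall>a\<in>{c,l}. \<forall>b\<in>L - {c,l}. E a b" using ladj fadj ff by auto
    have "\<exists>A B. A \<noteq> {} \<and> B \<noteq> {} \<and> A \<union> B = L \<and> A \<inter> B = {} \<and> (\<forall>a\<in>A. \<forall>b\<in>B. E a b)"
      by (rule exI[of _ "{c,l}"], rule exI[of _ "L - {c,l}"]) (use j ne cL lL in auto)
    then show False using irr unfolding irreducible_sub_def by auto
  qed
  have Fc: "l \<notin> F"
  proof
    assume "l \<in> F" then have "E c l" using Fcl[rule_format, OF cF] l(2) by auto
    then show False using nlc E_sym by auto
  qed
  have Lc: "c \<notin> Lz"
  proof
    assume "c \<in> Lz" then have "E l c" using Lcl[rule_format, OF l(1)] l(2) by auto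
    then show False using nlc by auto
  qed
  obtain z1 where z1: "z' = z1" by simp
  have z'ne: "z' \<noteq> []"
  proof
    assume "z' = []" then have "c \<in> Lz" using zc by (simp add: Lz_def)
    then show False using Lc by simp
  qed
  obtain c2' y1 z'' where z2: "z' = (c2',y1)#z''" using z'ne by (metis list.exhaust prod.exhaust)
  have c2L: "c2' \<in> L" using z(2) zc z2 by auto
  have "c2' \<noteq> c" using z(1) zc z2 by auto
  then have c2l: "c2' = l" using c2L Lcl2 by auto
  have cl: "c \<noteq> l" using l by simp
  obtain v x y where vxy: "v \<in> {c,l}" "x \<in> carrier (G v)" "y \<in> carrier (G v)" "x \<noteq> \<one>\<^bsub>G v\<^esub>" "y \<noteq> \<one>\<^bsub>G v\<^esub>" "x \<noteq> y"
    using two[rule_format, OF Lcl2 cl] by auto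
  obtain x' y' where xy': "nt (c,x')" "nt (l,y')" "(x',y') \<noteq> (k, y1)"
  proof (cases "v = c")
    case True
    have "nt (c,x)" "nt (c,y)" using vxy True cL LV by (auto simp: nt_def)
    moreover have "nt (l, sel l)" using ntL lL by auto
    ultimately show ?thesis using that vxy(6) by (metis prod.inject)
  next
    case False
    then have vl: "v = l" using vxy by auto
    have "nt (l,x)" "nt (l,y)" using vxy vl lL LV by (auto simp: nt_def)
    moreover have "nt (c, sel c)" using ntL cL by auto
    ultimately show ?thesis using that vxy(6) by (metis prod.inject)
  qed
  define h where "h = [(c,x'),(l,y')]"
  have hn: "\<forall>x\<in>set h. nt x" using xy' by (simp add: h_def)
  have hv: "verts h \<subseteq> L" using cL lL by (auto simp: h_def)
  obtain M where M: "M \<ge> 1" "eqw (z @ pw h M) (pw h M @ z)" using commh[OF hn hv] by blast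
  have nEcl: "\<not> E c l" using nlc E_sym by blast
  have rh: "red h" using xy' nEcl cl by (simp add: h_def)
  have ov: "\<forall>v. reach v (rev h) \<longrightarrow> \<not> reach v h" using cl nEcl nlc by (auto simp: h_def)
  have ry: "red (pw h M)" using red_pw[OF rh ov] .
  have vh: "verts h = {c,l}" by (auto simp: h_def)
  have "red (z @ pw h M)"
  proof -
    have "\<forall>v. reach v (rev z) \<longrightarrow> \<not> reach v (pw h M)"
    proof (intro allI impI)
      fix v assume a: "reach v (rev z)"
      then have "v \<in> Lz" by (simp add: Lz_def)
      then have "v = l" using LzL Lcl2 Lc by auto
      then show "\<not> reach v (pw h M)" using reach_pw[OF M(1), of l h] vh cl nlc by (auto simp: h_def)
    qed
    then show ?thesis using z ry by (simp add: red_app)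
  qed
  moreover have "red (pw h M @ z)"
  proof -
    have "\<forall>v. reach v (rev (pw h M)) \<longrightarrow> \<not> reach v z"
    proof (intro allI impI)
      fix v assume a: "reach v (rev (pw h M))"
      then have "v \<in> verts h" using reach_verts[OF a] verts_pw[OF M(1)] by auto
      then have "reach v (rev h)" using reach_rev_pw[OF M(1)] a by blast
      then have "v = l" using nEcl by (auto simp: h_def)
      then show "\<not> reach v z" using Fc by (simp add: F_def)
    qed
    then show ?thesis using z ry by (simp add: red_app)
  qed
  ultimately have "sw (z @ pw h M) (pw h M @ z)" using normal_form M(2) by blast
  moreover have "\<forall>a\<in>verts (z @ pw h M). \<forall>b\<in>verts (z @ pw h M). \<not> E a b"
  proof -
    have "verts (pw h M) = {c,l}" using verts_pw[OF M(1)] vh by simp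
    then have "verts (z @ pw h M) \<subseteq> {c,l}" using z(2) Lcl2 by (simp add: image_Un)
    then show ?thesis
    proof (intro ballI)
      fix a b assume "verts (z @ pw h M) \<subseteq> {c,l}" "a \<in> verts (z @ pw h M)" "b \<in> verts (z @ pw h M)"
      then have "a \<in> {c,l}" "b \<in> {c,l}" by auto
      then show "\<not> E a b" using E_irr nEcl nlc by auto
    qed
  qed
  ultimately have eq: "pw h M @ z = z @ pw h M" using sw_indep by blast
  obtain M' where "M = Suc M'" using M(1) by (cases M) auto
  then have "pw h M @ z = (c,x') # (l,y') # (pw h M' @ z)" by (simp add: pw_Suc h_def)
  moreover have "z @ pw h M = (c,k) # (l,y1) # (z'' @ pw h M)" using zc z2 c2l by simp
  ultimately show False using eq xy'(3) by simp
qed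

end

lemma vz_carrier: "x \<in> virtual_centre H \<Longrightarrow> x \<in> carrier H"
  by (simp add: virtual_centre_def)

lemma (in group) rcosets_Int:
  assumes "subgroup K1 G" "subgroup K2 G" "finite (rcosets K1)" "finite (rcosets K2)"
  shows "finite (rcosets (K1 \<inter> K2))"
proof -
  have "rcosets (K1 \<inter> K2) \<subseteq> (\<lambda>p. fst p \<inter> snd p) ` ((rcosets K1) \<times> (rcosets K2))"
  proof
    fix C assume "C \<in> rcosets (K1 \<inter> K2)"
    then obtain g where g: "g \<in> carrier G" "C = (K1 \<inter> K2) #> g" by (auto simp: RCOSETS_def)
    have "(K1 \<inter> K2) #> g = (K1 #> g) \<inter> (K2 #> g)"
    proof
      show "(K1 \<inter> K2) #> g \<subseteq> (K1 #> g) \<inter> (K2 #> g)" by (auto simp: r_coset_def)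
      show "(K1 #> g) \<inter> (K2 #> g) \<subseteq> (K1 \<inter> K2) #> g"
      proof
        fix y assume "y \<in> (K1 #> g) \<inter> (K2 #> g)"
        then obtain a b where ab: "a \<in> K1" "b \<in> K2" "y = a \<otimes> g" "y = b \<otimes> g" by (auto simp: r_coset_def)
        have "a \<in> carrier G" "b \<in> carrier G" using ab assms subgroup.mem_carrier by metis+
        then have "a = b" using ab g r_cancel by metis
        then show "y \<in> (K1 \<inter> K2) #> g" using ab by (auto simp: r_coset_def)
      qed
    qed
    moreover have "K1 #> g \<in> rcosets K1" "K2 #> g \<in> rcosets K2"
      using g assms subgroup.subset by (metis rcosetsI)+
    ultimately show "C \<in> (\<lambda>p. fst p \<inter> snd p) ` ((rcosets K1) \<times> (rcosets K2))" using g by force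
  qed
  then show ?thesis using assms by (meson finite_SigmaI finite_imageI finite_subset)
qed

lemma (in group) vz_subgroup: "subgroup (virtual_centre G) G"
proof (rule subgroupI)
  show "virtual_centre G \<subseteq> carrier G" by (auto simp: virtual_centre_def)
  have rc: "rcosets (carrier G) \<subseteq> {carrier G}"
  proof
    fix C assume "C \<in> rcosets (carrier G)"
    then obtain g where "g \<in> carrier G" "C = carrier G #> g" by (auto simp: RCOSETS_def)
    then show "C \<in> {carrier G}" using coset_join2[OF _ subgroup_self] by simp
  qed
  have "finite (rcosets (carrier G))" using finite_subset[OF rc] by simp
  moreover have "\<forall>k\<in>carrier G. \<one> \<otimes> k = k \<otimes> \<one>" by simp
  ultimately have "\<one> \<in> virtual_centre G" unfolding virtual_centre_def using subgroup_self by blast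
  then show "virtual_centre G \<noteq> {}" by blast
next
  fix a assume "a \<in> virtual_centre G"
  then obtain K where K: "a \<in> carrier G" "subgroup K G" "finite (rcosets K)" "\<forall>k\<in>K. a \<otimes> k = k \<otimes> a"
    by (auto simp: virtual_centre_def)
  have "\<forall>k\<in>K. inv a \<otimes> k = k \<otimes> inv a"
  proof
    fix k assume k: "k \<in> K"
    then have kc: "k \<in> carrier G" using K(2) subgroup.mem_carrier by metis
    have ak: "a \<otimes> k = k \<otimes> a" using K k by auto
    have "inv a \<otimes> k = inv a \<otimes> k \<otimes> (a \<otimes> inv a)" using K(1) kc by simp
    also have "\<dots> = inv a \<otimes> (k \<otimes> a) \<otimes> inv a" using K(1) kc by (simp add: m_assoc)
    also have "\<dots> = inv a \<otimes> (a \<otimes> k) \<otimes> inv a" using ak by simp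
    also have "\<dots> = k \<otimes> inv a" using K(1) kc by (simp add: m_assoc[symmetric])
    finally show "inv a \<otimes> k = k \<otimes> inv a" .
  qed
  moreover have "inv a \<in> carrier G" using K(1) by simp
  ultimately show "inv a \<in> virtual_centre G" using K(2,3) unfolding virtual_centre_def by blast
next
  fix a b assume "a \<in> virtual_centre G" "b \<in> virtual_centre G"
  then obtain K1 K2 where K1: "a \<in> carrier G" "subgroup K1 G" "finite (rcosets K1)" "\<forall>k\<in>K1. a \<otimes> k = k \<otimes> a"
    and K2: "b \<in> carrier G" "subgroup K2 G" "finite (rcosets K2)" "\<forall>k\<in>K2. b \<otimes> k = k \<otimes> b"
    by (auto simp: virtual_centre_def)
  have "\<forall>k\<in>K1 \<inter> K2. a \<otimes> b \<otimes> k = k \<otimes> (a \<otimes> b)"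
  proof
    fix k assume k: "k \<in> K1 \<inter> K2"
    then have kc: "k \<in> carrier G" using K1(2) subgroup.mem_carrier by (metis IntD1)
    have "a \<otimes> b \<otimes> k = a \<otimes> (k \<otimes> b)" using K1(1) K2 k kc by (simp add: m_assoc)
    also have "\<dots> = k \<otimes> (a \<otimes> b)" using K1 K2(1) k kc by (simp add: m_assoc[symmetric])
    finally show "a \<otimes> b \<otimes> k = k \<otimes> (a \<otimes> b)" .
  qed
  moreover have "subgroup (K1 \<inter> K2) G" using K1(2) K2(2) subgroups_Inter_pair by blast
  moreover have "finite (rcosets (K1 \<inter> K2))" using rcosets_Int K1(2,3) K2(2,3) by blast
  moreover have "a \<otimes> b \<in> carrier G" using K1(1) K2(1) by simp
  ultimately show "a \<otimes> b \<in> virtual_centre G" unfolding virtual_centre_def by blast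
qed

lemma (in group) pigeon_pow:
  assumes "subgroup K G" "finite (rcosets K)" "g \<in> carrier G"
  shows "\<exists>M\<ge>1. g [^] (M::nat) \<in> K"
proof -
  define f where "f = (\<lambda>n::nat. K #> g [^] n)"
  have "f ` UNIV \<subseteq> rcosets K" using assms subgroup.subset by (auto simp: f_def intro: rcosetsI)
  then have "finite (f ` UNIV)" using assms finite_subset by blast
  then have "\<not> inj f" using finite_imageD by blast
  then obtain n1 n2 where n: "n1 \<noteq> n2" "f n1 = f n2" unfolding inj_def by blast
  have key: "\<exists>M::nat\<ge>1. g [^] M \<in> K" if "p < q" "f p = f q" for p q
  proof -
    have "g [^] q \<in> K #> g [^] p" using that assms by (simp add: f_def repr_independenceD)
    then have "g [^] q \<otimes> inv (g [^] p) \<in> K" using subgroup.rcos_module_imp[OF assms(1) is_group] assms by simp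
    moreover have "g [^] q = g [^] (q - p) \<otimes> g [^] p" using that assms by (simp add: nat_pow_mult)
    ultimately have "g [^] (q - p) \<in> K" using assms by (simp add: m_assoc)
    then show ?thesis using that by (intro exI[of _ "q - p"]) auto
  qed
  show ?thesis
  proof (cases "n1 < n2")
    case True then show ?thesis using key n by blast
  next
    case False then have "n2 < n1" using n by auto
    then show ?thesis using key n by metis
  qed
qed

lemma z2_elems:
  assumes "group H" "is_Z2 H"
  shows "\<exists>a. carrier H = {\<one>\<^bsub>H\<^esub>, a} \<and> a \<noteq> \<one>\<^bsub>H\<^esub>"
proof -
  obtain f where f: "f \<in> iso H (integer_mod_group 2)" using assms unfolding is_Z2_def is_iso_def by blast
  have "bij_betw f (carrier H) {0..<2}" using f by (simp add: iso_def carrier_integer_mod_group)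
  then have "card (carrier H) = card {0..<(2::int)}" by (rule bij_betw_same_card)
  then have c: "card (carrier H) = 2" by simp
  then obtain x y where xy: "carrier H = {x,y}" "x \<noteq> y" by (meson card_2_iff)
  have o: "\<one>\<^bsub>H\<^esub> \<in> carrier H" using assms(1) group.is_monoid monoid.one_closed by blast
  show ?thesis
  proof (cases "x = \<one>\<^bsub>H\<^esub>")
    case True then show ?thesis using xy by auto
  next
    case False then have "y = \<one>\<^bsub>H\<^esub>" using o xy by auto
    then show ?thesis using xy False by auto
  qed
qed

lemma z2_sq:
  assumes "group H" "carrier H = {\<one>\<^bsub>H\<^esub>, a}" "a \<noteq> \<one>\<^bsub>H\<^esub>"
  shows "a \<otimes>\<^bsub>H\<^esub> a = \<one>\<^bsub>H\<^esub>"
proof -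
  interpret group H by fact
  have a: "a \<in> carrier H" using assms by auto
  have "a \<otimes>\<^bsub>H\<^esub> a \<in> carrier H" using a by simp
  moreover have "a \<otimes>\<^bsub>H\<^esub> a \<noteq> a"
  proof
    assume "a \<otimes>\<^bsub>H\<^esub> a = a"
    then have "a \<otimes>\<^bsub>H\<^esub> a = a \<otimes>\<^bsub>H\<^esub> \<one>\<^bsub>H\<^esub>" using a by simp
    then have "a = \<one>\<^bsub>H\<^esub>" using a l_cancel one_closed by blast
    then show False using assms by simp
  qed
  ultimately show ?thesis using assms(2) by blast
qed

lemma z2_of:
  assumes "group H" "carrier H = {\<one>\<^bsub>H\<^esub>, a}" "a \<noteq> \<one>\<^bsub>H\<^esub>"
  shows "is_Z2 H"
proof -
  define f where "f = (\<lambda>x. if x = \<one>\<^bsub>H\<^esub> then (0::int) else 1)"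
  have sq: "a \<otimes>\<^bsub>H\<^esub> a = \<one>\<^bsub>H\<^esub>" using z2_sq[OF assms] .
  have ac: "a \<in> carrier H" using assms(2) by simp
  have o: "\<one>\<^bsub>H\<^esub> \<in> carrier H" using assms(2) by simp
  interpret GG: group H by fact
  have l1: "\<one>\<^bsub>H\<^esub> \<otimes>\<^bsub>H\<^esub> y = y" if "y \<in> carrier H" for y
    using that by (rule GG.l_one)
  have r1: "x \<otimes>\<^bsub>H\<^esub> \<one>\<^bsub>H\<^esub> = x" if "x \<in> carrier H" for x
    using that by (rule GG.r_one)
  have mult: "f (x \<otimes>\<^bsub>H\<^esub> y) = (f x + f y) mod 2" if "x \<in> carrier H" "y \<in> carrier H" for x y
  proof -
    have x: "x = \<one>\<^bsub>H\<^esub> \<or> x = a" and y: "y = \<one>\<^bsub>H\<^esub> \<or> y = a" using that assms(2) by auto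
    show ?thesis
    proof (cases "x = \<one>\<^bsub>H\<^esub>")
      case True then show ?thesis using l1[OF that(2)] y assms(3) by (auto simp: f_def)
    next
      case False then have xa: "x = a" using x by simp
      show ?thesis
      proof (cases "y = \<one>\<^bsub>H\<^esub>")
        case True then show ?thesis using r1[OF that(1)] xa assms(3) by (simp add: f_def)
      next
        case False then have "y = a" using y by simp
        then show ?thesis using xa sq assms(3) by (simp add: f_def)
      qed
    qed
  qed
  have fc: "f \<in> carrier H \<rightarrow> carrier (integer_mod_group 2)"
    by (auto simp: carrier_integer_mod_group f_def)
  have "f \<in> hom H (integer_mod_group 2)"
    unfolding hom_def using fc mult by simp
  moreover have "bij_betw f (carrier H) (carrier (integer_mod_group 2))"
  proof -
    have c2: "carrier (integer_mod_group 2) = {0, 1}" by (auto simp: carrier_integer_mod_group)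
    have "f \<one>\<^bsub>H\<^esub> = 0" "f a = 1" using assms(3) by (auto simp: f_def)
    then have "f ` carrier H = {0,1}" using assms(2) by simp
    moreover have "inj_on f (carrier H)" unfolding inj_on_def using assms(2,3) by (auto simp: f_def)
    ultimately show ?thesis unfolding bij_betw_def using c2 by simp
  qed
  ultimately show ?thesis unfolding is_Z2_def is_iso_def iso_def by blast
qed


context gpl begin

definition filt :: "'v set \<Rightarrow> ('v \<times> 'g) list \<Rightarrow> ('v \<times> 'g) list" where
  "filt S w = filter (\<lambda>x. fst x \<in> S) w"

lemma filt_simps[simp]: "filt S [] = []" "filt S (xs @ ys) = filt S xs @ filt S ys"
  "filt S ((v,g)#xs) = (if v \<in> S then (v,g) # filt S xs else filt S xs)"
  by (auto simp: filt_def)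

lemma filt_words: "w \<in> W \<Longrightarrow> filt S w \<in> W" by (auto simp: filt_def gp_words_def)

lemma filt_id: "verts w \<subseteq> S \<Longrightarrow> filt S w = w" by (auto simp: filt_def intro!: filter_True)

lemma verts_filt: "verts (filt S w) \<subseteq> S \<inter> verts w" by (auto simp: filt_def)

lemma eq_filt: "eqw w w' \<Longrightarrow> eqw (filt S w) (filt S w')"
proof (induction rule: gp_eq.induct)
  case (gp_refl w) then show ?case by (simp add: eq_refl filt_words)
next
  case (gp_sym w w') then show ?case using eq_sym by blast
next
  case (gp_trans w w' w'') then show ?case using eq_trans by blast
next
  case (gp_unit xs ys v)
  show ?case
  proof (cases "v \<in> S")
    case True
    have "eqw (filt S xs @ [(v, \<one>\<^bsub>G v\<^esub>)] @ filt S ys) (filt S xs @ filt S ys)"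
      by (rule gp_eq.gp_unit) (use gp_unit filt_words in auto)
    then show ?thesis using True by simp
  next
    case False then show ?thesis using gp_unit by (simp add: eq_refl filt_words)
  qed
next
  case (gp_merge xs ys v g h)
  show ?case
  proof (cases "v \<in> S")
    case True
    have "eqw (filt S xs @ [(v, g), (v, h)] @ filt S ys) (filt S xs @ [(v, g \<otimes>\<^bsub>G v\<^esub> h)] @ filt S ys)"
      by (rule gp_eq.gp_merge) (use gp_merge filt_words in auto)
    then show ?thesis using True by simp
  next
    case False then show ?thesis using gp_merge by (simp add: eq_refl filt_words)
  qed
next
  case (gp_comm xs ys u v g h)
  show ?case
  proof (cases "u \<in> S \<and> v \<in> S")
    case True
    have "eqw (filt S xs @ [(u, g), (v, h)] @ filt S ys) (filt S xs @ [(v, h), (u, g)] @ filt S ys)"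
      by (rule gp_eq.gp_comm) (use gp_comm filt_words in auto)
    then show ?thesis using True by simp
  next
    case False
    have "eqw (filt S (xs @ [(u, g), (v, h)] @ ys)) (filt S (xs @ [(u, g), (v, h)] @ ys))"
      by (rule eq_refl) (use gp_comm filt_words in auto)
    then show ?thesis using False by (auto split: if_splits)
  qed
qed

lemma move_right: "adjall v p \<Longrightarrow> p \<in> W \<Longrightarrow> v \<in> V \<Longrightarrow> h \<in> carrier (G v) \<Longrightarrow>
   eqw ((v,h) # p) (p @ [(v,h)])"
  using move_left eq_sym by blast

lemma eq_filt_split:
  assumes "A \<inter> C = {}" "\<forall>a\<in>A. \<forall>c\<in>C. E a c" "w \<in> W"
  shows "eqw (filt (A \<union> C) w) (filt A w @ filt C w)"
  using assms(3)
proof (induction w)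
  case Nil then show ?case by (simp add: eq_refl)
next
  case (Cons x w)
  obtain v g where x: "x = (v,g)" by (cases x)
  have v: "v \<in> V" "g \<in> carrier (G v)" and w: "w \<in> W" using Cons.prems x by auto
  have IH: "eqw (filt (A \<union> C) w) (filt A w @ filt C w)" using Cons.IH w by simp
  consider "v \<in> A" | "v \<in> C" | "v \<notin> A" "v \<notin> C" by blast
  then show ?case
  proof cases
    case 1
    then have nC: "v \<notin> C" using assms(1) by auto
    have "eqw ([(v,g)] @ filt (A \<union> C) w @ []) ([(v,g)] @ (filt A w @ filt C w) @ [])"
      by (rule eq_ctxt[OF IH]) (use v in auto)
    then show ?thesis using 1 nC x by simp
  next
    case 2
    then have nA: "v \<notin> A" using assms(1) by auto
    have a: "eqw ([(v,g)] @ filt (A \<union> C) w @ []) ([(v,g)] @ (filt A w @ filt C w) @ [])"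
      by (rule eq_ctxt[OF IH]) (use v in auto)
    have adj: "adjall v (filt A w)" using assms(2) 2 E_sym by (auto simp: adjall_def filt_def)
    have b: "eqw ([] @ ((v,g) # filt A w) @ filt C w) ([] @ (filt A w @ [(v,g)]) @ filt C w)"
      by (rule eq_ctxt[OF move_right[OF adj]]) (use v w filt_words in auto)
    show ?thesis using eq_trans[OF a] b 2 nA x by simp
  next
    case 3 then show ?thesis using IH x by simp
  qed
qed

definition prodv :: "'v \<Rightarrow> ('v \<times> 'g) list \<Rightarrow> 'g" where
  "prodv u w = foldr (\<lambda>x acc. if fst x = u then snd x \<otimes>\<^bsub>G u\<^esub> acc else acc) w \<one>\<^bsub>G u\<^esub>"

lemma prodv_simps[simp]: "prodv u [] = \<one>\<^bsub>G u\<^esub>"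
  "prodv u ((v,g)#w) = (if v = u then g \<otimes>\<^bsub>G u\<^esub> prodv u w else prodv u w)"
  by (auto simp: prodv_def)

context fixes u assumes uV: "u \<in> V"
begin

interpretation Gu: group "G u" using grp uV by blast

lemma prodv_carrier: "w \<in> W \<Longrightarrow> prodv u w \<in> carrier (G u)"
proof (induction w)
  case (Cons x w) then show ?case by (cases x) auto
qed simp

lemma prodv_app: "xs \<in> W \<Longrightarrow> ys \<in> W \<Longrightarrow> prodv u (xs @ ys) = prodv u xs \<otimes>\<^bsub>G u\<^esub> prodv u ys"
proof (induction xs)
  case Nil then show ?case using prodv_carrier by simp
next
  case (Cons x xs)
  obtain v g where x: "x = (v,g)" by (cases x)
  show ?case using Cons x prodv_carrier by (auto simp: Gu.m_assoc)
qed

lemma eq_prodv: "eqw w w' \<Longrightarrow> prodv u w = prodv u w'"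
proof (induction rule: gp_eq.induct)
  case (gp_unit xs ys v)
  have o: "\<one>\<^bsub>G v\<^esub> \<in> carrier (G v)" using gp_unit grp group.is_monoid monoid.one_closed by metis
  have "prodv u (xs @ [(v, \<one>\<^bsub>G v\<^esub>)] @ ys) = prodv u xs \<otimes>\<^bsub>G u\<^esub> (prodv u [(v, \<one>\<^bsub>G v\<^esub>)] \<otimes>\<^bsub>G u\<^esub> prodv u ys)"
    using gp_unit o by (simp add: prodv_app del: append_Cons append.simps)
  also have "\<dots> = prodv u (xs @ ys)" using gp_unit prodv_carrier by (simp add: prodv_app)
  finally show ?case .
next
  case (gp_merge xs ys v g h)
  have m: "g \<otimes>\<^bsub>G v\<^esub> h \<in> carrier (G v)" using gp_merge grp group.is_monoid monoid.m_closed by metis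
  have "prodv u (xs @ [(v,g),(v,h)] @ ys) = prodv u xs \<otimes>\<^bsub>G u\<^esub> (prodv u [(v,g),(v,h)] \<otimes>\<^bsub>G u\<^esub> prodv u ys)"
    using gp_merge by (simp add: prodv_app del: append_Cons append.simps)
  also have "\<dots> = prodv u xs \<otimes>\<^bsub>G u\<^esub> (prodv u [(v, g \<otimes>\<^bsub>G v\<^esub> h)] \<otimes>\<^bsub>G u\<^esub> prodv u ys)"
    using gp_merge by (auto simp: Gu.m_assoc)
  also have "\<dots> = prodv u (xs @ [(v, g \<otimes>\<^bsub>G v\<^esub> h)] @ ys)"
    using gp_merge m by (simp add: prodv_app del: append_Cons append.simps)
  finally show ?case .
next
  case (gp_comm xs ys a b g h)
  have "a \<noteq> b" using gp_comm E_irr by auto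
  have "prodv u (xs @ [(a,g),(b,h)] @ ys) = prodv u xs \<otimes>\<^bsub>G u\<^esub> (prodv u [(a,g),(b,h)] \<otimes>\<^bsub>G u\<^esub> prodv u ys)"
    using gp_comm by (simp add: prodv_app del: append_Cons append.simps)
  also have "\<dots> = prodv u xs \<otimes>\<^bsub>G u\<^esub> (prodv u [(b,h),(a,g)] \<otimes>\<^bsub>G u\<^esub> prodv u ys)"
    using gp_comm \<open>a \<noteq> b\<close> by auto
  also have "\<dots> = prodv u (xs @ [(b,h),(a,g)] @ ys)"
    using gp_comm by (simp add: prodv_app del: append_Cons append.simps)
  finally show ?case .
qed auto

lemma prodv_winv: "w \<in> W \<Longrightarrow> prodv u (winv w) = inv\<^bsub>G u\<^esub> (prodv u w)"
proof (induction w)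
  case Nil then show ?case by (simp add: winv_def)
next
  case (Cons x w)
  obtain v g where x: "x = (v,g)" by (cases x)
  have w: "w \<in> W" "winv w \<in> W" using Cons x winv_words by auto
  have vg: "v \<in> V" "g \<in> carrier (G v)" using Cons.prems x by auto
  have "prodv u (winv (x # w)) = prodv u (winv w) \<otimes>\<^bsub>G u\<^esub> prodv u [(v, inv\<^bsub>G v\<^esub> g)]"
    using w vg x by (simp add: winv_Cons prodv_app group.inv_closed[OF grp])
  then show ?case using Cons.IH[OF w(1)] x vg prodv_carrier[OF w(1)]
    by (auto simp: Gu.inv_mult_group)
qed

lemma eq_single: "ws \<in> W \<Longrightarrow> verts ws \<subseteq> {u} \<Longrightarrow> eqw ws [(u, prodv u ws)]"
proof (induction ws)
  case Nil
  have "eqw ([] @ [(u, \<one>\<^bsub>G u\<^esub>)] @ []) ([] @ [])" by (rule gp_unit) (use uV in auto)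
  then show ?case using eq_sym by simp
next
  case (Cons x ws)
  obtain v g where x: "x = (v,g)" by (cases x)
  have vu: "v = u" and ws: "ws \<in> W" "verts ws \<subseteq> {u}" and g: "g \<in> carrier (G u)" using Cons.prems x by auto
  have a: "eqw ([(u,g)] @ ws @ []) ([(u,g)] @ [(u, prodv u ws)] @ [])"
    by (rule eq_ctxt[OF Cons.IH[OF ws]]) (use uV g in auto)
  have b: "eqw ([] @ [(u,g), (u, prodv u ws)] @ []) ([] @ [(u, g \<otimes>\<^bsub>G u\<^esub> prodv u ws)] @ [])"
    by (rule gp_merge) (use uV g prodv_carrier ws in auto)
  show ?case using eq_trans[OF a] b x vu by simp
qed

end

end

context gpl begin

context fixes a b assumes ab: "a \<noteq> b" "\<not> E a b"
begin

lemma nEba: "\<not> E b a" using ab E_sym by blast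

lemma reach_ab: "verts ((c,k)#w) \<subseteq> {a,b} \<Longrightarrow> reach v ((c,k)#w) \<longleftrightarrow> v = c"
proof -
  assume s: "verts ((c,k)#w) \<subseteq> {a,b}"
  have "\<not> (E v c \<and> reach v w)"
  proof
    assume "E v c \<and> reach v w"
    then have "v \<in> {a,b}" "c \<in> {a,b}" using reach_verts s by auto
    then show False using \<open>E v c \<and> reach v w\<close> E_irr ab nEba by auto
  qed
  then show ?thesis by auto
qed

lemma alt_last: "red ((c,k)#w) \<Longrightarrow> verts ((c,k)#w) \<subseteq> {a,b} \<Longrightarrow>
   (fst (last ((c,k)#w)) = c \<longleftrightarrow> odd (length ((c,k)#w)))"
proof (induction w arbitrary: c k)
  case Nil then show ?case by simp
next
  case (Cons y w)
  obtain c' k' where y: "y = (c',k')" by (cases y)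
  have r: "red ((c',k')#w)" "verts ((c',k')#w) \<subseteq> {a,b}" using Cons.prems y by auto
  have cc: "c' \<noteq> c" using Cons.prems y by auto
  have inab: "c \<in> {a,b}" "c' \<in> {a,b}" using Cons.prems y by auto
  have l: "fst (last ((c',k')#w)) \<in> {a,b}"
  proof -
    have "last ((c',k')#w) \<in> set ((c',k')#w)" by (rule last_in_set) simp
    then show ?thesis using r(2) by force
  qed
  have "fst (last ((c,k)#(c',k')#w)) = c \<longleftrightarrow> fst (last ((c',k')#w)) \<noteq> c'"
    using l inab cc by auto
  then show ?case using Cons.IH[OF r] y by simp
qed

lemma pair_even:
  assumes na: "nt (a,\<alpha>)" and nb: "nt (b,\<beta>)" and r: "red r" "verts r \<subseteq> {a,b}"
    and comm: "\<exists>M\<ge>1. eqw (r @ pw [(a,\<alpha>),(b,\<beta>)] M) (pw [(a,\<alpha>),(b,\<beta>)] M @ r)"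
  shows "even (length r)"
proof (rule ccontr)
  assume odd: "\<not> even (length r)"
  define h where "h = [(a,\<alpha>),(b,\<beta>)]"
  obtain M where M: "M \<ge> 1" "eqw (r @ pw h M) (pw h M @ r)" using comm by (auto simp: h_def)
  obtain c k r' where rc: "r = (c,k)#r'" using odd by (cases r) auto
  have lastc: "fst (last r) = c" using alt_last[of c k r'] r rc odd by simp
  obtain r'' k'' where rr: "rev r = (c,k'')#r''"
  proof -
    have "rev r = last r # rev (butlast r)" using rc by (metis list.distinct(1) rev.simps(2) append_butlast_last_id rev_rev_ident)
    then show ?thesis using that lastc by (metis prod.collapse)
  qed
  have rrv: "verts ((c,k'')#r'') \<subseteq> {a,b}" using r(2) rr by (metis set_rev image_set verts_rev)
  have ra: "reach v (rev r) \<longleftrightarrow> v = c" for v using reach_ab[OF rrv] rr by simp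
  have rf: "reach v r \<longleftrightarrow> v = c" for v using reach_ab[of c k r'] r(2) rc by simp
  obtain M' where M': "M = Suc M'" using M(1) by (cases M) auto
  have vpw: "verts (pw h M') \<subseteq> {a,b}" by (induction M') (auto simp: pw_def h_def)
  have ph: "pw h M = (a,\<alpha>) # ((b,\<beta>) # pw h M')" by (simp add: M' pw_Suc h_def)
  have rph: "rev (pw h M) = (b,\<beta>) # ((a,\<alpha>) # rev (pw h M'))" by (simp add: M' pw_Suc' h_def)
  have p1: "reach v (pw h M) \<longleftrightarrow> v = a" for v
    using reach_ab[of a \<alpha> "(b,\<beta>) # pw h M'"] vpw ph by simp
  have p2: "reach v (rev (pw h M)) \<longleftrightarrow> v = b" for v
    using reach_ab[of b \<beta> "(a,\<alpha>) # rev (pw h M')"] vpw rph by simp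
  have rh: "red h" using na nb ab by (simp add: h_def)
  have ov: "\<forall>v. reach v (rev h) \<longrightarrow> \<not> reach v h" using ab nEba by (auto simp: h_def)
  have ry: "red (pw h M)" using red_pw[OF rh ov] .
  have cab: "c \<in> {a,b}" using r(2) rc by auto
  show False
  proof (cases "c = a")
    case True
    have "red (pw h M @ r)" using ry r(1) p2 rf True ab by (auto simp: red_app)
    moreover have "\<not> red (r @ pw h M)" using ra p1 True by (auto simp: red_app)
    ultimately show False using core eq_sym[OF M(2)] by blast
  next
    case False
    then have cb: "c = b" using cab by auto
    have "red (r @ pw h M)" using ry r(1) p1 ra cb ab by (auto simp: red_app)
    moreover have "\<not> red (pw h M @ r)" using rf p2 cb by (auto simp: red_app)
    ultimately show False using core M(2) by blast
  qed
qed

lemma pair_gen: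
  assumes ca: "carrier (G a) = {\<one>\<^bsub>G a\<^esub>, \<alpha>}" and cb: "carrier (G b) = {\<one>\<^bsub>G b\<^esub>, \<beta>}"
    and T: "cls [(a,\<alpha>),(b,\<beta>)] \<in> T" "cls [(b,\<beta>),(a,\<alpha>)] \<in> T"
  shows "red r \<Longrightarrow> verts r \<subseteq> {a,b} \<Longrightarrow> even (length r) \<Longrightarrow> cls r \<in> generate GP T"
proof (induction "length r" arbitrary: r rule: less_induct)
  case less
  show ?case
  proof (cases r)
    case Nil then show ?thesis using generate.one GP_one by metis
  next
    case (Cons x r1)
    then obtain c k c' k' r'' where rr: "r = (c,k)#(c',k')#r''" using less.prems(3)
      by (cases r1) (auto, metis prod.exhaust)
    have nt1: "nt (c,k)" and nt2: "nt (c',k')" and cc: "c' \<noteq> c" using less.prems(1) rr by auto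
    have r'': "red r''" "verts r'' \<subseteq> {a,b}" "even (length r'')" using less.prems rr by auto
    have g'': "cls r'' \<in> generate GP T" using less.hyps[OF _ r''] rr by simp
    have cin: "c \<in> {a,b}" "c' \<in> {a,b}" using less.prems(2) rr by auto
    have pairT: "cls [(c,k),(c',k')] \<in> T"
    proof (cases "c = a")
      case True
      then have "c' = b" using cc cin by auto
      then have "k = \<alpha>" "k' = \<beta>" using nt1 nt2 True ca cb by (auto simp: nt_def)
      then show ?thesis using T True \<open>c' = b\<close> by simp
    next
      case False
      then have "c = b" "c' = a" using cc cin by auto
      then have "k = \<beta>" "k' = \<alpha>" using nt1 nt2 ca cb by (auto simp: nt_def)
      then show ?thesis using T \<open>c = b\<close> \<open>c' = a\<close> by simp
    qed
    have w1: "[(c,k),(c',k')] \<in> W" "r'' \<in> W" using nt1 nt2 r'' red_words by (auto simp: nt_def)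
    have "cls r = cls [(c,k),(c',k')] \<otimes>\<^bsub>GP\<^esub> cls r''" using w1 rr by (simp add: GP_mult)
    then show ?thesis using generate.eng[OF generate.incl[OF pairT] g''] by simp
  qed
qed

end

end

context gpl begin

lemma one_cV: "v \<in> V \<Longrightarrow> \<one>\<^bsub>G v\<^esub> \<in> carrier (G v)"
  using grp group.is_monoid monoid.one_closed by metis

lemma GP_cls_carrier: "w \<in> W \<Longrightarrow> cls w \<in> carrier GP" by (simp add: GP_carrier)

lemma vz_K:
  assumes "cls w \<in> virtual_centre GP"
  obtains K where "subgroup K GP" "finite (rcosets\<^bsub>GP\<^esub> K)" "\<forall>k\<in>K. cls w \<otimes>\<^bsub>GP\<^esub> k = k \<otimes>\<^bsub>GP\<^esub> cls w"
  using assms unfolding virtual_centre_def by blast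

lemma vz_comm_words:
  assumes "cls w \<in> virtual_centre GP" "w \<in> W"
  shows "\<forall>h\<in>W. \<exists>M\<ge>1. eqw (w @ pw h M) (pw h M @ w)"
proof
  fix h assume h: "h \<in> W"
  obtain K where K: "subgroup K GP" "finite (rcosets\<^bsub>GP\<^esub> K)" "\<forall>k\<in>K. cls w \<otimes>\<^bsub>GP\<^esub> k = k \<otimes>\<^bsub>GP\<^esub> cls w"
    using vz_K[OF assms(1)] by blast
  obtain M :: nat where M: "M \<ge> 1" "cls h [^]\<^bsub>GP\<^esub> M \<in> K"
    using group.pigeon_pow[OF GP_group K(1,2) GP_cls_carrier[OF h]] by blast
  have "cls h [^]\<^bsub>GP\<^esub> M = cls (pw h M)" using GP_pow[OF h] by (simp add: pw_def)
  then have "cls w \<otimes>\<^bsub>GP\<^esub> cls (pw h M) = cls (pw h M) \<otimes>\<^bsub>GP\<^esub> cls w" using K(3) M(2) by metis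
  then have "cls (w @ pw h M) = cls (pw h M @ w)" using assms(2) pw_words[OF h] by (simp add: GP_mult)
  then have "eqw (w @ pw h M) (pw h M @ w)" using cls_eq_iff assms(2) pw_words[OF h] by simp
  then show "\<exists>M\<ge>1. eqw (w @ pw h M) (pw h M @ w)" using M(1) by blast
qed

lemma block_comm:
  assumes "cls w \<in> virtual_centre GP" "w \<in> W" "eqw (filt B w) r"
  shows "\<forall>h\<in>W. verts h \<subseteq> B \<longrightarrow> (\<exists>M\<ge>1. eqw (r @ pw h M) (pw h M @ r))"
proof (intro ballI impI)
  fix h assume h: "h \<in> W" "verts h \<subseteq> B"
  obtain M where M: "M \<ge> 1" "eqw (w @ pw h M) (pw h M @ w)" using vz_comm_words[OF assms(1,2)] h by blast
  have vp: "verts (pw h M) \<subseteq> B" using verts_pw[OF M(1)] h by simp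
  have "eqw (filt B w @ pw h M) (pw h M @ filt B w)"
    using eq_filt[OF M(2), of B] filt_id[OF vp] by simp
  moreover have "eqw (r @ pw h M) (filt B w @ pw h M)"
    using eq_app[OF eq_sym[OF assms(3)] eq_refl[OF pw_words[OF h(1)]]] .
  moreover have "eqw (pw h M @ filt B w) (pw h M @ r)"
    using eq_app[OF eq_refl[OF pw_words[OF h(1)]] assms(3)] .
  ultimately have "eqw (r @ pw h M) (pw h M @ r)" using eq_trans by metis
  then show "\<exists>M\<ge>1. eqw (r @ pw h M) (pw h M @ r)" using M(1) by blast
qed

lemma prodv_filt: "u \<in> S \<Longrightarrow> prodv u (filt S w) = prodv u w"
proof (induction w)
  case (Cons x w) then show ?case by (cases x) auto
qed simp

lemma singleton_vz:
  assumes u: "u \<in> V" and vz: "cls w \<in> virtual_centre GP" and w: "w \<in> W"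
  shows "prodv u w \<in> virtual_centre (G u)"
proof -
  interpret Gu: group "G u" using grp u by blast
  obtain K where K: "subgroup K GP" "finite (rcosets\<^bsub>GP\<^esub> K)" "\<forall>k\<in>K. cls w \<otimes>\<^bsub>GP\<^esub> k = k \<otimes>\<^bsub>GP\<^esub> cls w"
    using vz_K[OF vz] by blast
  define Ku where "Ku = {prodv u h | h. h \<in> W \<and> cls h \<in> K}"
  have KGP: "K \<subseteq> carrier GP" using K(1) subgroup.subset by blast
  have KuI: "prodv u h \<in> Ku" if "h \<in> W" "cls h \<in> K" for h
    unfolding Ku_def using that by blast
  have sgK: "subgroup Ku (G u)"
  proof (rule Gu.subgroupI)
    show "Ku \<subseteq> carrier (G u)" using prodv_carrier[OF u] by (auto simp: Ku_def)
    have "\<one>\<^bsub>GP\<^esub> \<in> K" by (rule subgroup.one_closed[OF K(1)])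
    then have "cls [] \<in> K" using GP_one by simp
    then show "Ku \<noteq> {}" using KuI[of "[]"] by auto
  next
    fix x assume "x \<in> Ku"
    then obtain h where h: "x = prodv u h" "h \<in> W" "cls h \<in> K" by (auto simp: Ku_def)
    have "inv\<^bsub>GP\<^esub> (cls h) \<in> K" using subgroup.m_inv_closed[OF K(1) h(3)] .
    then have "cls (winv h) \<in> K" using GP_inv h by simp
    then have "prodv u (winv h) \<in> Ku" using KuI winv_words h by blast
    then show "inv\<^bsub>G u\<^esub> x \<in> Ku" using h prodv_winv[OF u] by simp
  next
    fix x y assume "x \<in> Ku" "y \<in> Ku"
    then obtain h1 h2 where h: "x = prodv u h1" "h1 \<in> W" "cls h1 \<in> K" "y = prodv u h2" "h2 \<in> W" "cls h2 \<in> K"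
      by (auto simp: Ku_def)
    have "cls h1 \<otimes>\<^bsub>GP\<^esub> cls h2 \<in> K" using subgroup.m_closed[OF K(1) h(3) h(6)] .
    then have "cls (h1 @ h2) \<in> K" using h GP_mult by simp
    then have "prodv u (h1 @ h2) \<in> Ku" using KuI h by simp
    then show "x \<otimes>\<^bsub>G u\<^esub> y \<in> Ku" using h prodv_app[OF u] by simp
  qed
  have fin: "finite (rcosets\<^bsub>G u\<^esub> Ku)"
  proof -
    define Phi where "Phi = (\<lambda>C. Ku #>\<^bsub>G u\<^esub> prodv u (SOME h. h \<in> W \<and> cls h \<in> C))"
    have "rcosets\<^bsub>G u\<^esub> Ku \<subseteq> Phi ` (rcosets\<^bsub>GP\<^esub> K)"
    proof
      fix C assume "C \<in> rcosets\<^bsub>G u\<^esub> Ku"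
      then obtain y where y: "y \<in> carrier (G u)" "C = Ku #>\<^bsub>G u\<^esub> y" by (auto simp: RCOSETS_def)
      have yW: "[(u,y)] \<in> W" using u y by simp
      define C0 where "C0 = K #>\<^bsub>GP\<^esub> cls [(u,y)]"
      have C0: "C0 \<in> rcosets\<^bsub>GP\<^esub> K" using group.rcosetsI[OF GP_group KGP GP_cls_carrier[OF yW]] by (simp add: C0_def)
      have "\<exists>h. h \<in> W \<and> cls h \<in> C0"
        using group.rcos_self[OF GP_group GP_cls_carrier[OF yW] K(1)] yW unfolding C0_def by blast
      then have hs: "(SOME h. h \<in> W \<and> cls h \<in> C0) \<in> W \<and> cls (SOME h. h \<in> W \<and> cls h \<in> C0) \<in> C0"
        by (rule someI_ex)
      define h0 where "h0 = (SOME h. h \<in> W \<and> cls h \<in> C0)"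
      have h0: "h0 \<in> W" "cls h0 \<in> K #>\<^bsub>GP\<^esub> cls [(u,y)]" using hs by (auto simp: h0_def C0_def)
      have "cls h0 \<otimes>\<^bsub>GP\<^esub> inv\<^bsub>GP\<^esub> cls [(u,y)] \<in> K"
        using subgroup.rcos_module_imp[OF K(1) GP_group GP_cls_carrier[OF yW] h0(2)] .
      then have "cls (h0 @ winv [(u,y)]) \<in> K" using GP_inv[OF yW] GP_mult h0(1) winv_words[OF yW] by simp
      moreover have "h0 @ winv [(u,y)] \<in> W" using h0(1) winv_words[OF yW] by simp
      ultimately have "prodv u (h0 @ winv [(u,y)]) \<in> Ku" using KuI by blast
      then have "prodv u h0 \<otimes>\<^bsub>G u\<^esub> inv\<^bsub>G u\<^esub> y \<in> Ku"
        using prodv_app[OF u h0(1) winv_words[OF yW]] prodv_winv[OF u yW] y by simp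
      then have "prodv u h0 \<in> Ku #>\<^bsub>G u\<^esub> y"
        using subgroup.rcos_module_rev[OF sgK Gu.is_group y(1) prodv_carrier[OF u h0(1)]] by simp
      then have "Ku #>\<^bsub>G u\<^esub> y = Ku #>\<^bsub>G u\<^esub> prodv u h0" using Gu.repr_independence[OF _ y(1) sgK] by simp
      then have "C = Phi C0" using y by (simp add: Phi_def h0_def)
      then show "C \<in> Phi ` (rcosets\<^bsub>GP\<^esub> K)" using C0 by blast
    qed
    then show ?thesis using K(2) finite_subset by blast
  qed
  have cm: "\<forall>k\<in>Ku. prodv u w \<otimes>\<^bsub>G u\<^esub> k = k \<otimes>\<^bsub>G u\<^esub> prodv u w"
  proof
    fix k assume "k \<in> Ku"
    then obtain h where h: "k = prodv u h" "h \<in> W" "cls h \<in> K" by (auto simp: Ku_def)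
    have "cls w \<otimes>\<^bsub>GP\<^esub> cls h = cls h \<otimes>\<^bsub>GP\<^esub> cls w" using K(3) h by blast
    then have "cls (w @ h) = cls (h @ w)" using GP_mult w h by simp
    then have "eqw (w @ h) (h @ w)" using cls_eq_iff w h by simp
    then have "prodv u (w @ h) = prodv u (h @ w)" using eq_prodv[OF u] by blast
    then show "prodv u w \<otimes>\<^bsub>G u\<^esub> k = k \<otimes>\<^bsub>G u\<^esub> prodv u w" using prodv_app[OF u] w h by simp
  qed
  show ?thesis unfolding virtual_centre_def using prodv_carrier[OF u w] sgK fin cm by blast
qed

end

locale gpm = gpl +
  fixes P :: "'a set set"
  assumes jd: "join_decomposition V E G P"
    and ntr: "\<And>v. v \<in> V \<Longrightarrow> carrier (G v) \<noteq> {\<one>\<^bsub>G v\<^esub>}"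
begin

abbreviation "Sg \<equiv> (\<Union>u \<in> {u. {u} \<in> P}. gp_incl V E G u ` virtual_centre (G u))
       \<union> {gp_incl V E G a x \<otimes>\<^bsub>graph_product V E G\<^esub> gp_incl V E G b y | a b x y.
            {a, b} \<in> P \<and> a \<noteq> b \<and> \<not> E a b \<and> is_Z2 (G a) \<and> is_Z2 (G b)
            \<and> x \<in> carrier (G a) - {\<one>\<^bsub>G a\<^esub>} \<and> y \<in> carrier (G b) - {\<one>\<^bsub>G b\<^esub>}}"

lemma UP: "\<Union>P = V" using jd by (simp add: join_decomposition_def)
lemma blk_sub: "B \<in> P \<Longrightarrow> B \<subseteq> V" using UP by blast
lemma blk_disj: "B \<in> P \<Longrightarrow> C \<in> P \<Longrightarrow> B \<noteq> C \<Longrightarrow> B \<inter> C = {} \<and> (\<forall>x\<in>B. \<forall>y\<in>C. E x y)"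
  using jd by (simp add: join_decomposition_def)
lemma finP: "finite P"
proof -
  have "P \<subseteq> Pow V" using blk_sub by blast
  moreover have "finite (Pow V)" using finV by simp
  ultimately show ?thesis by (rule finite_subset)
qed
lemma blk_cases: "B \<in> P \<Longrightarrow> card B = 1
        \<or> (\<exists>a b. B = {a, b} \<and> a \<noteq> b \<and> \<not> E a b \<and> is_Z2 (G a) \<and> is_Z2 (G b))
        \<or> (irreducible_sub E B \<and> card B \<ge> 2 \<and> \<not> (card B = 2 \<and> (\<forall>v\<in>B. is_Z2 (G v))))"
  using jd by (simp add: join_decomposition_def)

lemma nontriv: "v \<in> V \<Longrightarrow> \<exists>x\<in>carrier (G v). x \<noteq> \<one>\<^bsub>G v\<^esub>"
  using ntr one_cV by blast

lemma adj_other: "B \<in> P \<Longrightarrow> v \<in> B \<Longrightarrow> u \<in> V - B \<Longrightarrow> E v u"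
proof -
  assume B: "B \<in> P" "v \<in> B" "u \<in> V - B"
  obtain C where C: "C \<in> P" "u \<in> C" using UP B(3) by blast
  then have "C \<noteq> B" using B by auto
  then show "E v u" using blk_disj[OF B(1) C(1)] B C by blast
qed

lemma gp_incl_cls: "gp_incl V E G u p = cls [(u,p)]" by (simp add: gp_incl_def)

lemma not_z2_two:
  assumes v: "v \<in> V" and nz: "\<not> is_Z2 (G v)"
  shows "\<exists>x\<in>carrier (G v). \<exists>y\<in>carrier (G v). x \<noteq> \<one>\<^bsub>G v\<^esub> \<and> y \<noteq> \<one>\<^bsub>G v\<^esub> \<and> x \<noteq> y"
proof (rule ccontr)
  assume c: "\<not> ?thesis"
  obtain x where x: "x \<in> carrier (G v)" "x \<noteq> \<one>\<^bsub>G v\<^esub>" using nontriv[OF v] by blast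
  have "carrier (G v) = {\<one>\<^bsub>G v\<^esub>, x}"
  proof
    show "carrier (G v) \<subseteq> {\<one>\<^bsub>G v\<^esub>, x}"
    proof
      fix y assume y: "y \<in> carrier (G v)"
      show "y \<in> {\<one>\<^bsub>G v\<^esub>, x}"
      proof (rule ccontr)
        assume "y \<notin> {\<one>\<^bsub>G v\<^esub>, x}"
        then have "y \<noteq> \<one>\<^bsub>G v\<^esub>" "y \<noteq> x" by auto
        then show False using c x y by blast
      qed
    qed
    show "{\<one>\<^bsub>G v\<^esub>, x} \<subseteq> carrier (G v)" using x one_cV[OF v] by auto
  qed
  then have "is_Z2 (G v)" using z2_of[OF grp[OF v] _ x(2)] by blast
  then show False using nz by simp
qed

lemma block_gen:
  assumes vz: "cls w \<in> virtual_centre GP" and w: "w \<in> W" and B: "B \<in> P"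
  shows "cls (filt B w) \<in> generate GP Sg"
proof -
  have BV: "B \<subseteq> V" using blk_sub[OF B] .
  have fw: "filt B w \<in> W" using filt_words[OF w] .
  obtain r where r: "red r" "eqw (filt B w) r" "verts r \<subseteq> verts (filt B w)"
    using exists_red[OF fw] by blast
  have rB: "verts r \<subseteq> B" using r(3) verts_filt[of B w] by blast
  have cr: "cls (filt B w) = cls r" using cls_eq_iff[OF fw] r(2) by simp
  have bc: "\<forall>h\<in>W. verts h \<subseteq> B \<longrightarrow> (\<exists>M\<ge>1. eqw (r @ pw h M) (pw h M @ r))"
    using block_comm[OF vz w r(2)] .
  consider "card B = 1"
    | "\<exists>a b. B = {a, b} \<and> a \<noteq> b \<and> \<not> E a b \<and> is_Z2 (G a) \<and> is_Z2 (G b)"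
    | "irreducible_sub E B" "card B \<ge> 2" "\<not> (card B = 2 \<and> (\<forall>v\<in>B. is_Z2 (G v)))"
    using blk_cases[OF B] by blast
  then show ?thesis
  proof cases
    case 1
    then obtain u where Bu: "B = {u}" by (rule card_1_singletonE)
    have u: "u \<in> V" using BV Bu by simp
    have pv: "prodv u w \<in> virtual_centre (G u)" using singleton_vz[OF u vz w] .
    have vf: "verts (filt B w) \<subseteq> {u}" using verts_filt[of B w] Bu by simp
    have "eqw (filt B w) [(u, prodv u (filt B w))]" by (rule eq_single[OF u fw vf])
    then have "cls (filt B w) = cls [(u, prodv u w)]"
      using cls_eq_iff[OF fw] prodv_filt[of u B w] Bu by simp
    then have "cls (filt B w) = gp_incl V E G u (prodv u w)" by (simp add: gp_incl_cls)
    moreover have "gp_incl V E G u (prodv u w) \<in> Sg"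
    proof (rule UnI1)
      have "gp_incl V E G u (prodv u w) \<in> gp_incl V E G u ` virtual_centre (G u)" using pv by (rule imageI)
      moreover have "u \<in> {u. {u} \<in> P}" using B Bu by simp
      ultimately show "gp_incl V E G u (prodv u w) \<in> (\<Union>u \<in> {u. {u} \<in> P}. gp_incl V E G u ` virtual_centre (G u))"
        by (rule UN_I[rotated])
    qed
    ultimately show ?thesis by (simp add: generate.incl)
  next
    case 2
    then obtain a b where ab: "B = {a, b}" "a \<noteq> b" "\<not> E a b" "is_Z2 (G a)" "is_Z2 (G b)" by blast
    have aV: "a \<in> V" and bV: "b \<in> V" using BV ab by auto
    obtain \<alpha> where al: "carrier (G a) = {\<one>\<^bsub>G a\<^esub>, \<alpha>}" "\<alpha> \<noteq> \<one>\<^bsub>G a\<^esub>" using z2_elems[OF grp[OF aV] ab(4)] by blast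
    obtain \<beta> where be: "carrier (G b) = {\<one>\<^bsub>G b\<^esub>, \<beta>}" "\<beta> \<noteq> \<one>\<^bsub>G b\<^esub>" using z2_elems[OF grp[OF bV] ab(5)] by blast
    have na: "nt (a,\<alpha>)" and nb: "nt (b,\<beta>)" using al be aV bV by (auto simp: nt_def)
    have hW: "[(a,\<alpha>),(b,\<beta>)] \<in> W" using na nb by (auto simp: nt_def)
    have hB: "verts [(a,\<alpha>),(b,\<beta>)] \<subseteq> B" using ab(1) by simp
    have cm: "\<exists>M\<ge>1. eqw (r @ pw [(a,\<alpha>),(b,\<beta>)] M) (pw [(a,\<alpha>),(b,\<beta>)] M @ r)"
      using bc hW hB by blast
    have ev: "even (length r)" using pair_even[OF ab(2,3) na nb r(1) _ cm] rB ab(1) by simp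
    have ac: "\<alpha> \<in> carrier (G a)" and bcc: "\<beta> \<in> carrier (G b)" using al be by auto
    have rab: "verts r \<subseteq> {a,b}" using rB ab(1) by simp
    have abP: "{a,b} \<in> P" using B ab by simp
    have baP: "{b,a} \<in> P" using abP by (simp add: insert_commute)
    have nba: "\<not> E b a" using ab E_sym by blast
    have e1: "cls [(a,\<alpha>),(b,\<beta>)] = gp_incl V E G a \<alpha> \<otimes>\<^bsub>GP\<^esub> gp_incl V E G b \<beta>"
      using na nb by (simp add: gp_incl_cls GP_mult nt_def)
    have e2: "cls [(b,\<beta>),(a,\<alpha>)] = gp_incl V E G b \<beta> \<otimes>\<^bsub>GP\<^esub> gp_incl V E G a \<alpha>"
      using na nb by (simp add: gp_incl_cls GP_mult nt_def)
    have T1: "cls [(a,\<alpha>),(b,\<beta>)] \<in> Sg"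
    proof (rule UnI2, unfold mem_Collect_eq)
      show "\<exists>a' b' x y. cls [(a,\<alpha>),(b,\<beta>)] = gp_incl V E G a' x \<otimes>\<^bsub>GP\<^esub> gp_incl V E G b' y \<and>
            {a', b'} \<in> P \<and> a' \<noteq> b' \<and> \<not> E a' b' \<and> is_Z2 (G a') \<and> is_Z2 (G b')
            \<and> x \<in> carrier (G a') - {\<one>\<^bsub>G a'\<^esub>} \<and> y \<in> carrier (G b') - {\<one>\<^bsub>G b'\<^esub>}"
        by (rule exI[of _ a], rule exI[of _ b], rule exI[of _ \<alpha>], rule exI[of _ \<beta>])
          (use e1 abP ab al be ac bcc in simp)
    qed
    have T2: "cls [(b,\<beta>),(a,\<alpha>)] \<in> Sg"
    proof (rule UnI2, unfold mem_Collect_eq)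
      show "\<exists>a' b' x y. cls [(b,\<beta>),(a,\<alpha>)] = gp_incl V E G a' x \<otimes>\<^bsub>GP\<^esub> gp_incl V E G b' y \<and>
            {a', b'} \<in> P \<and> a' \<noteq> b' \<and> \<not> E a' b' \<and> is_Z2 (G a') \<and> is_Z2 (G b')
            \<and> x \<in> carrier (G a') - {\<one>\<^bsub>G a'\<^esub>} \<and> y \<in> carrier (G b') - {\<one>\<^bsub>G b'\<^esub>}"
        by (rule exI[of _ b], rule exI[of _ a], rule exI[of _ \<beta>], rule exI[of _ \<alpha>])
          (use e2 baP ab nba al be ac bcc in simp)
    qed
    have "cls r \<in> generate GP Sg"
      using pair_gen[OF ab(2,3) al(1) be(1) T1 T2 r(1) rab ev] .
    then show ?thesis using cr by simp
  next
    case 3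
    have finB: "finite B" using BV finV finite_subset by blast
    have c2: "\<exists>x\<in>B. \<exists>y\<in>B. x \<noteq> y"
    proof (rule ccontr)
      assume "\<not> ?thesis"
      then have "card B \<le> Suc 0" using card_le_Suc0_iff_eq[OF finB] by simp
      then show False using 3(2) by simp
    qed
    have ntB: "\<forall>v\<in>B. \<exists>x\<in>carrier (G v). x \<noteq> \<one>\<^bsub>G v\<^esub>"
    proof
      fix v assume "v \<in> B" then have "v \<in> V" using BV by blast
      then show "\<exists>x\<in>carrier (G v). x \<noteq> \<one>\<^bsub>G v\<^esub>" by (rule nontriv)
    qed
    have two: "\<forall>c d. B = {c,d} \<longrightarrow> c \<noteq> d \<longrightarrow> (\<exists>v\<in>{c,d}. \<exists>x\<in>carrier (G v). \<exists>y\<in>carrier (G v).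
                 x \<noteq> \<one>\<^bsub>G v\<^esub> \<and> y \<noteq> \<one>\<^bsub>G v\<^esub> \<and> x \<noteq> y)"
    proof (intro allI impI)
      fix c d assume cd: "B = {c,d}" "c \<noteq> d"
      then have "card B = 2" by simp
      then have "\<not> (\<forall>v\<in>B. is_Z2 (G v))" using 3(3) by simp
      then obtain v where v: "v \<in> B" "\<not> is_Z2 (G v)" by blast
      have "v \<in> V" using v BV by blast
      then have "\<exists>x\<in>carrier (G v). \<exists>y\<in>carrier (G v). x \<noteq> \<one>\<^bsub>G v\<^esub> \<and> y \<noteq> \<one>\<^bsub>G v\<^esub> \<and> x \<noteq> y"
        using not_z2_two[OF _ v(2)] by simp
      moreover have "v \<in> {c,d}" using v(1) cd(1) by simp
      ultimately show "\<exists>v\<in>{c,d}. \<exists>x\<in>carrier (G v). \<exists>y\<in>carrier (G v). x \<noteq> \<one>\<^bsub>G v\<^esub> \<and> y \<noteq> \<one>\<^bsub>G v\<^esub> \<and> x \<noteq> y"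
        by (rule bexI)
    qed
    have "r = []"
    proof (rule ccontr)
      assume "r \<noteq> []"
      then show False using irred_block[OF BV 3(1) c2 ntB two r(1) rB _ bc] by simp
    qed
    then have "cls (filt B w) = \<one>\<^bsub>GP\<^esub>" using cr GP_one by simp
    then show ?thesis by (simp add: generate.one)
  qed
qed

end

context gpm begin

lemma sub_dir:
  assumes x: "x \<in> virtual_centre GP"
  shows "x \<in> generate GP Sg"
proof -
  have "x \<in> carrier GP" using vz_carrier[OF x] .
  then obtain w where w: "w \<in> W" "x = cls w" by (auto simp: GP_carrier)
  have vz: "cls w \<in> virtual_centre GP" using x w by simp
  have ind: "finite Q \<Longrightarrow> Q \<subseteq> P \<Longrightarrow> cls (filt (\<Union>Q) w) \<in> generate GP Sg" for Q
  proof (induction Q rule: finite_induct)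
    case empty
    have "filt {} w = []" by (simp add: filt_def)
    then show ?case using generate.one[of GP Sg] GP_one by simp
  next
    case (insert B Q)
    have B: "B \<in> P" and QP: "Q \<subseteq> P" using insert.prems by auto
    have disj: "B \<inter> \<Union>Q = {}"
    proof -
      have "B \<inter> C = {}" if "C \<in> Q" for C
      proof -
        have "C \<in> P" "C \<noteq> B" using that QP insert.hyps(2) by auto
        then show ?thesis using blk_disj[OF B] by blast
      qed
      then show ?thesis by blast
    qed
    have adj: "\<forall>a\<in>B. \<forall>c\<in>\<Union>Q. E a c"
    proof (intro ballI)
      fix a c assume a: "a \<in> B" and c: "c \<in> \<Union>Q"
      then obtain C where C: "C \<in> Q" "c \<in> C" by blast
      have "C \<in> P" "B \<noteq> C" using C QP insert.hyps(2) by auto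
      then show "E a c" using blk_disj[OF B] a C(2) by blast
    qed
    have e: "eqw (filt (B \<union> \<Union>Q) w) (filt B w @ filt (\<Union>Q) w)" using eq_filt_split[OF disj adj w(1)] .
    have "cls (filt (\<Union>(insert B Q)) w) = cls (filt B w) \<otimes>\<^bsub>GP\<^esub> cls (filt (\<Union>Q) w)"
      using e cls_eq_iff filt_words[OF w(1)] GP_mult by simp
    then show ?case using generate.eng[OF block_gen[OF vz w(1) B] insert.IH[OF QP]] by simp
  qed
  have "cls (filt (\<Union>P) w) \<in> generate GP Sg" using ind[OF finP] by simp
  moreover have "filt (\<Union>P) w = w"
  proof -
    have "verts w \<subseteq> V" using w(1) by (auto simp: gp_words_def)
    then show ?thesis using UP filt_id by simp
  qed
  ultimately show ?thesis using w by simp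
qed

end

context gpm begin

lemma s1_vz:
  assumes uP: "{u} \<in> P" and p: "p \<in> virtual_centre (G u)"
  shows "cls [(u,p)] \<in> virtual_centre GP"
proof -
  have u: "u \<in> V" using blk_sub[OF uP] by simp
  interpret Gu: group "G u" using grp u by blast
  interpret GPg: group GP by (rule GP_group)
  obtain Ku where Ku: "p \<in> carrier (G u)" "subgroup Ku (G u)" "finite (rcosets\<^bsub>G u\<^esub> Ku)"
      "\<forall>k\<in>Ku. p \<otimes>\<^bsub>G u\<^esub> k = k \<otimes>\<^bsub>G u\<^esub> p"
    using p unfolding virtual_centre_def by blast
  have KuC: "Ku \<subseteq> carrier (G u)" using subgroup.subset[OF Ku(2)] .
  define K where "K = {Xe. \<exists>h. Xe = cls h \<and> h \<in> W \<and> prodv u h \<in> Ku}"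
  have memK: "cls h \<in> K \<longleftrightarrow> prodv u h \<in> Ku" if h: "h \<in> W" for h
  proof
    assume "cls h \<in> K"
    then obtain h' where h': "cls h = cls h'" "h' \<in> W" "prodv u h' \<in> Ku" by (auto simp: K_def)
    have "eqw h h'" using h'(1) cls_eq_iff[OF h] by simp
    then show "prodv u h \<in> Ku" using h'(3) eq_prodv[OF u] by simp
  next
    assume "prodv u h \<in> Ku" then show "cls h \<in> K" using h by (auto simp: K_def)
  qed
  have KC: "K \<subseteq> carrier GP" by (auto simp: K_def GP_carrier)
  have sgK: "subgroup K GP"
  proof (rule GPg.subgroupI)
    show "K \<subseteq> carrier GP" by (rule KC)
    have "prodv u [] \<in> Ku" using subgroup.one_closed[OF Ku(2)] by simp
    then have "cls [] \<in> K" using memK by simp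
    then show "K \<noteq> {}" by blast
  next
    fix Xe assume "Xe \<in> K"
    then obtain h where h: "Xe = cls h" "h \<in> W" "prodv u h \<in> Ku" by (auto simp: K_def)
    have "prodv u (winv h) \<in> Ku" using prodv_winv[OF u h(2)] subgroup.m_inv_closed[OF Ku(2) h(3)] by simp
    then have "cls (winv h) \<in> K" using memK winv_words[OF h(2)] by simp
    then show "inv\<^bsub>GP\<^esub> Xe \<in> K" using GP_inv[OF h(2)] h(1) by simp
  next
    fix Xe Ye assume "Xe \<in> K" "Ye \<in> K"
    then obtain h1 h2 where h: "Xe = cls h1" "h1 \<in> W" "prodv u h1 \<in> Ku" "Ye = cls h2" "h2 \<in> W" "prodv u h2 \<in> Ku"
      by (auto simp: K_def)
    have "prodv u (h1 @ h2) \<in> Ku" using prodv_app[OF u h(2) h(5)] subgroup.m_closed[OF Ku(2) h(3) h(6)] by simp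
    then have "cls (h1 @ h2) \<in> K" using memK h by simp
    then show "Xe \<otimes>\<^bsub>GP\<^esub> Ye \<in> K" using GP_mult h by simp
  qed
  have fin: "finite (rcosets\<^bsub>GP\<^esub> K)"
  proof -
    define Psi where "Psi = (\<lambda>C. K #>\<^bsub>GP\<^esub> cls [(u, SOME y. y \<in> C)])"
    have "rcosets\<^bsub>GP\<^esub> K \<subseteq> Psi ` (rcosets\<^bsub>G u\<^esub> Ku)"
    proof
      fix C' assume "C' \<in> rcosets\<^bsub>GP\<^esub> K"
      then obtain g where g: "g \<in> carrier GP" "C' = K #>\<^bsub>GP\<^esub> g" by (auto simp: RCOSETS_def)
      then obtain h where h: "h \<in> W" "g = cls h" by (auto simp: GP_carrier)
      have ph: "prodv u h \<in> carrier (G u)" using prodv_carrier[OF u h(1)] .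
      define C where "C = Ku #>\<^bsub>G u\<^esub> prodv u h"
      have CR: "C \<in> rcosets\<^bsub>G u\<^esub> Ku" using Gu.rcosetsI[OF KuC ph] by (simp add: C_def)
      have "prodv u h \<in> C" using Gu.rcos_self[OF ph Ku(2)] by (simp add: C_def)
      then have y0C: "(SOME y. y \<in> C) \<in> C" by (rule someI)
      define y0 where "y0 = (SOME y. y \<in> C)"
      have y0: "y0 \<in> Ku #>\<^bsub>G u\<^esub> prodv u h" using y0C by (simp add: y0_def C_def)
      have y0c: "y0 \<in> carrier (G u)" using Gu.r_coset_subset_G[OF KuC ph] y0 by blast
      have m: "y0 \<otimes>\<^bsub>G u\<^esub> inv\<^bsub>G u\<^esub> prodv u h \<in> Ku"
        using subgroup.rcos_module_imp[OF Ku(2) Gu.is_group ph y0] .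
      have yW: "[(u,y0)] \<in> W" using u y0c by simp
      have "prodv u ([(u,y0)] @ winv h) = y0 \<otimes>\<^bsub>G u\<^esub> inv\<^bsub>G u\<^esub> prodv u h"
        using prodv_app[OF u yW winv_words[OF h(1)]] prodv_winv[OF u h(1)] y0c by simp
      then have "cls ([(u,y0)] @ winv h) \<in> K" using memK[of "[(u,y0)] @ winv h"] m yW winv_words[OF h(1)] by simp
      then have "cls [(u,y0)] \<otimes>\<^bsub>GP\<^esub> inv\<^bsub>GP\<^esub> cls h \<in> K"
        using GP_inv[OF h(1)] GP_mult[OF yW winv_words[OF h(1)]] by simp
      then have "cls [(u,y0)] \<in> K #>\<^bsub>GP\<^esub> cls h"
        using subgroup.rcos_module_rev[OF sgK GP_group GP_cls_carrier[OF h(1)] GP_cls_carrier[OF yW]] by simp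
      then have "K #>\<^bsub>GP\<^esub> cls h = K #>\<^bsub>GP\<^esub> cls [(u,y0)]"
        using GPg.repr_independence[OF _ GP_cls_carrier[OF h(1)] sgK] by simp
      then have "C' = Psi C" using g h by (simp add: Psi_def y0_def)
      then show "C' \<in> Psi ` (rcosets\<^bsub>G u\<^esub> Ku)" using CR by blast
    qed
    moreover have "finite (Psi ` (rcosets\<^bsub>G u\<^esub> Ku))" using Ku(3) by simp
    ultimately show ?thesis by (rule finite_subset)
  qed
  have pW: "[(u,p)] \<in> W" using u Ku(1) by simp
  have cm: "\<forall>Xe\<in>K. cls [(u,p)] \<otimes>\<^bsub>GP\<^esub> Xe = Xe \<otimes>\<^bsub>GP\<^esub> cls [(u,p)]"
  proof
    fix Xe assume "Xe \<in> K"
    then obtain h where h: "Xe = cls h" "h \<in> W" "prodv u h \<in> Ku" by (auto simp: K_def)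
    define q where "q = prodv u h"
    define R where "R = filt (V - {u}) h"
    have qc: "q \<in> carrier (G u)" using prodv_carrier[OF u h(2)] by (simp add: q_def)
    have RW: "R \<in> W" using filt_words[OF h(2)] by (simp add: R_def)
    have qW: "[(u,q)] \<in> W" using u qc by simp
    have disj: "{u} \<inter> (V - {u}) = {}" by simp
    have adj: "\<forall>a\<in>{u}. \<forall>c\<in>V - {u}. E a c" by (simp add: adj_other[OF uP])
    have hv: "verts h \<subseteq> {u} \<union> (V - {u})" using h(2) u by (auto simp: gp_words_def)
    have e1: "eqw h (filt {u} h @ R)"
      using eq_filt_split[OF disj adj h(2)] filt_id[OF hv] by (simp add: R_def)
    have vf: "verts (filt {u} h) \<subseteq> {u}" using verts_filt[of "{u}" h] by blast
    have e2: "eqw (filt {u} h) [(u,q)]"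
      using eq_single[OF u filt_words[OF h(2)] vf] prodv_filt[of u "{u}" h] by (simp add: q_def)
    have "eqw h ([(u,q)] @ R)" using eq_trans[OF e1 eq_app[OF e2 eq_refl[OF RW]]] .
    then have Xq: "Xe = cls [(u,q)] \<otimes>\<^bsub>GP\<^esub> cls R" using h(1) cls_eq_iff[OF h(2)] GP_mult[OF qW RW] by simp
    have pq: "p \<otimes>\<^bsub>G u\<^esub> q = q \<otimes>\<^bsub>G u\<^esub> p" using Ku(4) h(3) by (simp add: q_def)
    have c1: "cls [(u,p)] \<otimes>\<^bsub>GP\<^esub> cls [(u,q)] = cls [(u,q)] \<otimes>\<^bsub>GP\<^esub> cls [(u,p)]"
    proof -
      have a: "eqw ([] @ [(u,p),(u,q)] @ []) ([] @ [(u, p \<otimes>\<^bsub>G u\<^esub> q)] @ [])"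
        by (rule gp_merge) (use u Ku(1) qc in auto)
      have b: "eqw ([] @ [(u,q),(u,p)] @ []) ([] @ [(u, q \<otimes>\<^bsub>G u\<^esub> p)] @ [])"
        by (rule gp_merge) (use u Ku(1) qc in auto)
      have a': "eqw [(u,p),(u,q)] [(u, q \<otimes>\<^bsub>G u\<^esub> p)]" using a pq by simp
      have b': "eqw [(u,q),(u,p)] [(u, q \<otimes>\<^bsub>G u\<^esub> p)]" using b by simp
      have "eqw [(u,p),(u,q)] [(u,q),(u,p)]" using eq_trans[OF a' eq_sym[OF b']] .
      then show ?thesis using GP_mult[OF pW qW] GP_mult[OF qW pW] cls_eq_iff pW qW by simp
    qed
    have c2: "cls [(u,p)] \<otimes>\<^bsub>GP\<^esub> cls R = cls R \<otimes>\<^bsub>GP\<^esub> cls [(u,p)]"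
    proof -
      have "adjall u R" using adj_other[OF uP] verts_filt[of "V - {u}" h] by (auto simp: adjall_def R_def)
      then have "eqw ((u,p) # R) (R @ [(u,p)])" using move_right[OF _ RW u Ku(1)] by simp
      then have "cls ((u,p) # R) = cls (R @ [(u,p)])" using cls_eq_iff[of "(u,p) # R"] pW RW by simp
      then show ?thesis using GP_mult[OF pW RW] GP_mult[OF RW pW] by simp
    qed
    have cp: "cls [(u,p)] \<in> carrier GP" "cls [(u,q)] \<in> carrier GP" "cls R \<in> carrier GP"
      using GP_cls_carrier pW qW RW by auto
    have "cls [(u,p)] \<otimes>\<^bsub>GP\<^esub> (cls [(u,q)] \<otimes>\<^bsub>GP\<^esub> cls R)
        = (cls [(u,q)] \<otimes>\<^bsub>GP\<^esub> cls [(u,p)]) \<otimes>\<^bsub>GP\<^esub> cls R" using c1 cp by (simp add: GPg.m_assoc[symmetric])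
    also have "\<dots> = cls [(u,q)] \<otimes>\<^bsub>GP\<^esub> (cls R \<otimes>\<^bsub>GP\<^esub> cls [(u,p)])" using c2 cp by (simp add: GPg.m_assoc)
    also have "\<dots> = (cls [(u,q)] \<otimes>\<^bsub>GP\<^esub> cls R) \<otimes>\<^bsub>GP\<^esub> cls [(u,p)]" using cp by (simp add: GPg.m_assoc)
    finally show "cls [(u,p)] \<otimes>\<^bsub>GP\<^esub> Xe = Xe \<otimes>\<^bsub>GP\<^esub> cls [(u,p)]" using Xq by simp
  qed
  show ?thesis unfolding virtual_centre_def using GP_cls_carrier[OF pW] sgK fin cm by blast
qed

end

lemma (in group) gen_comm:
  assumes e: "e \<in> carrier G" and T: "T \<subseteq> carrier G" and c: "\<forall>t\<in>T. e \<otimes> t = t \<otimes> e"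
  shows "g \<in> generate G T \<Longrightarrow> e \<otimes> g = g \<otimes> e"
proof (induction rule: generate.induct)
  case one then show ?case using e by simp
next
  case (incl h) then show ?case using c by blast
next
  case (inv h)
  have hc: "h \<in> carrier G" using inv T by blast
  have eh: "e \<otimes> h = h \<otimes> e" using c inv by blast
  have "e \<otimes> inv h = inv h \<otimes> (h \<otimes> e) \<otimes> inv h" using e hc by (simp add: m_assoc[symmetric])
  also have "\<dots> = inv h \<otimes> (e \<otimes> h) \<otimes> inv h" using eh by simp
  also have "\<dots> = inv h \<otimes> e" using e hc by (simp add: m_assoc)
  finally show ?case .
next
  case (eng h1 h2)
  have c1: "h1 \<in> carrier G" "h2 \<in> carrier G" using eng.hyps generate_in_carrier T by blast+
  have "e \<otimes> (h1 \<otimes> h2) = (h1 \<otimes> e) \<otimes> h2" using eng.IH e c1 by (simp add: m_assoc[symmetric])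
  also have "\<dots> = h1 \<otimes> (h2 \<otimes> e)" using eng.IH e c1 by (simp add: m_assoc)
  finally show ?case using e c1 by (simp add: m_assoc)
qed

lemma z2_xor:
  assumes "group H" "carrier H = {\<one>\<^bsub>H\<^esub>, c}" "c \<noteq> \<one>\<^bsub>H\<^esub>" "g \<in> carrier H" "h \<in> carrier H"
  shows "g \<otimes>\<^bsub>H\<^esub> h \<noteq> \<one>\<^bsub>H\<^esub> \<longleftrightarrow> (g \<noteq> \<one>\<^bsub>H\<^esub>) \<noteq> (h \<noteq> \<one>\<^bsub>H\<^esub>)"
proof -
  interpret group H by fact
  have sq: "c \<otimes>\<^bsub>H\<^esub> c = \<one>\<^bsub>H\<^esub>" using z2_sq[OF assms(1-3)] .
  have cc: "c \<in> carrier H" using assms(2) by simp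
  have g: "g = \<one>\<^bsub>H\<^esub> \<or> g = c" and h: "h = \<one>\<^bsub>H\<^esub> \<or> h = c" using assms(2,4,5) by auto
  then show ?thesis using sq cc assms(3) by auto
qed

context gpm begin

lemma s2_vz:
  assumes abP: "{a,b} \<in> P" and ab: "a \<noteq> b" "\<not> E a b" and za: "is_Z2 (G a)" and zb: "is_Z2 (G b)"
    and x: "x \<in> carrier (G a)" "x \<noteq> \<one>\<^bsub>G a\<^esub>" and y: "y \<in> carrier (G b)" "y \<noteq> \<one>\<^bsub>G b\<^esub>"
  shows "gp_incl V E G a x \<otimes>\<^bsub>GP\<^esub> gp_incl V E G b y \<in> virtual_centre GP"
proof -
  interpret GPg: group GP by (rule GP_group)
  have aV: "a \<in> V" and bV: "b \<in> V" using blk_sub[OF abP] by auto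
  have ca: "carrier (G a) = {\<one>\<^bsub>G a\<^esub>, x}"
  proof -
    obtain c where c: "carrier (G a) = {\<one>\<^bsub>G a\<^esub>, c}" "c \<noteq> \<one>\<^bsub>G a\<^esub>" using z2_elems[OF grp[OF aV] za] by blast
    then have "x = c" using x by auto
    then show ?thesis using c by simp
  qed
  have cb: "carrier (G b) = {\<one>\<^bsub>G b\<^esub>, y}"
  proof -
    obtain c where c: "carrier (G b) = {\<one>\<^bsub>G b\<^esub>, c}" "c \<noteq> \<one>\<^bsub>G b\<^esub>" using z2_elems[OF grp[OF bV] zb] by blast
    then have "y = c" using y by auto
    then show ?thesis using c by simp
  qed
  have xor: "g \<otimes>\<^bsub>G v\<^esub> h \<noteq> \<one>\<^bsub>G v\<^esub> \<longleftrightarrow> (g \<noteq> \<one>\<^bsub>G v\<^esub>) \<noteq> (h \<noteq> \<one>\<^bsub>G v\<^esub>)"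
    if "v \<in> {a,b}" "g \<in> carrier (G v)" "h \<in> carrier (G v)" for v g h
  proof (cases "v = a")
    case True then show ?thesis using z2_xor[OF grp[OF aV] ca x(2)] that by simp
  next
    case False then have "v = b" using that by simp
    then show ?thesis using z2_xor[OF grp[OF bV] cb y(2)] that by simp
  qed
  define cnt where "cnt = (\<lambda>h::('a \<times> 'b) list. length (filter (\<lambda>q. fst q \<in> {a,b} \<and> snd q \<noteq> \<one>\<^bsub>G (fst q)\<^esub>) h))"
  have cnt_app: "cnt (xs @ ys) = cnt xs + cnt ys" for xs ys by (simp add: cnt_def)
  have cnt_Cons: "cnt ((v,g) # h) = (if v \<in> {a,b} \<and> g \<noteq> \<one>\<^bsub>G v\<^esub> then 1 else 0) + cnt h" for v g h
    by (simp add: cnt_def)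
  have cnt_Nil: "cnt [] = 0" by (simp add: cnt_def)
  have eq_par: "eqw h h' \<Longrightarrow> even (cnt h) = even (cnt h')" for h h'
  proof (induction rule: gp_eq.induct)
    case (gp_unit xs ys v) then show ?case by (simp add: cnt_app cnt_Cons)
  next
    case (gp_merge xs ys v g h)
    show ?case
    proof (cases "v \<in> {a,b}")
      case True
      have "(g \<otimes>\<^bsub>G v\<^esub> h \<noteq> \<one>\<^bsub>G v\<^esub>) = ((g \<noteq> \<one>\<^bsub>G v\<^esub>) \<noteq> (h \<noteq> \<one>\<^bsub>G v\<^esub>))" using xor[OF True] gp_merge by simp
      then show ?thesis using True by (auto simp: cnt_app cnt_Cons)
    next
      case False then show ?thesis by (simp add: cnt_app cnt_Cons)
    qed
  next
    case (gp_comm xs ys u v g h) then show ?case by (simp add: cnt_app cnt_Cons)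
  qed auto
  have cnt_winv: "w \<in> W \<Longrightarrow> cnt (winv w) = cnt w" for w
  proof (induction w)
    case Nil then show ?case by (simp add: winv_def)
  next
    case (Cons q w)
    obtain v g where q: "q = (v,g)" by (cases q)
    have v: "v \<in> V" "g \<in> carrier (G v)" and w: "w \<in> W" using Cons.prems q by auto
    interpret Gv: group "G v" using grp v(1) by blast
    have "inv\<^bsub>G v\<^esub> g = \<one>\<^bsub>G v\<^esub> \<longleftrightarrow> g = \<one>\<^bsub>G v\<^esub>"
      using Gv.inv_eq_1_iff[OF v(2)] .
    then show ?case using Cons.IH[OF w] q by (simp add: winv_Cons cnt_app cnt_Cons cnt_Nil)
  qed
  define K where "K = {Z. \<exists>h. Z = cls h \<and> h \<in> W \<and> even (cnt h)}"
  have memK: "cls h \<in> K \<longleftrightarrow> even (cnt h)" if h: "h \<in> W" for h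
  proof
    assume "cls h \<in> K"
    then obtain h' where h': "cls h = cls h'" "h' \<in> W" "even (cnt h')" by (auto simp: K_def)
    have "eqw h h'" using h'(1) cls_eq_iff[OF h] by simp
    then show "even (cnt h)" using h'(3) eq_par by simp
  next
    assume "even (cnt h)" then show "cls h \<in> K" using h by (auto simp: K_def)
  qed
  have KC: "K \<subseteq> carrier GP" by (auto simp: K_def GP_carrier)
  have sgK: "subgroup K GP"
  proof (rule GPg.subgroupI)
    show "K \<subseteq> carrier GP" by (rule KC)
    have "cls [] \<in> K" using memK cnt_Nil by simp
    then show "K \<noteq> {}" by blast
  next
    fix Z assume "Z \<in> K"
    then obtain h where h: "Z = cls h" "h \<in> W" "even (cnt h)" by (auto simp: K_def)
    have "cls (winv h) \<in> K" using memK winv_words[OF h(2)] cnt_winv[OF h(2)] h(3) by simp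
    then show "inv\<^bsub>GP\<^esub> Z \<in> K" using GP_inv[OF h(2)] h(1) by simp
  next
    fix Z Y assume "Z \<in> K" "Y \<in> K"
    then obtain h1 h2 where h: "Z = cls h1" "h1 \<in> W" "even (cnt h1)" "Y = cls h2" "h2 \<in> W" "even (cnt h2)"
      by (auto simp: K_def)
    have "cls (h1 @ h2) \<in> K" using memK h cnt_app by simp
    then show "Z \<otimes>\<^bsub>GP\<^esub> Y \<in> K" using GP_mult h by simp
  qed
  have sW: "[(a,x)] \<in> W" and tW: "[(b,y)] \<in> W" using aV bV x y by auto
  have fin: "finite (rcosets\<^bsub>GP\<^esub> K)"
  proof -
    have "rcosets\<^bsub>GP\<^esub> K \<subseteq> {K, K #>\<^bsub>GP\<^esub> cls [(a,x)]}"
    proof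
      fix C assume "C \<in> rcosets\<^bsub>GP\<^esub> K"
      then obtain g where g: "g \<in> carrier GP" "C = K #>\<^bsub>GP\<^esub> g" by (auto simp: RCOSETS_def)
      then obtain h where h: "h \<in> W" "g = cls h" by (auto simp: GP_carrier)
      show "C \<in> {K, K #>\<^bsub>GP\<^esub> cls [(a,x)]}"
      proof (cases "even (cnt h)")
        case True
        then have "g \<in> K" using memK h by simp
        then have "C = K" using GPg.coset_join2[OF g(1) sgK] g(2) by simp
        then show ?thesis by simp
      next
        case False
        have ix: "inv\<^bsub>G a\<^esub> x \<in> carrier (G a)" "inv\<^bsub>G a\<^esub> x \<noteq> \<one>\<^bsub>G a\<^esub>"
          using group.inv_closed[OF grp[OF aV] x(1)] group.inv_eq_1_iff[OF grp[OF aV] x(1)] x(2) by auto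
        have hiW: "h @ [(a, inv\<^bsub>G a\<^esub> x)] \<in> W" using h(1) ix aV by simp
        have "cnt (h @ [(a, inv\<^bsub>G a\<^esub> x)]) = cnt h + 1" using ix by (simp add: cnt_app cnt_Cons cnt_Nil)
        then have "cls (h @ [(a, inv\<^bsub>G a\<^esub> x)]) \<in> K" using memK[OF hiW] False by simp
        moreover have "cls (h @ [(a, inv\<^bsub>G a\<^esub> x)]) = cls h \<otimes>\<^bsub>GP\<^esub> inv\<^bsub>GP\<^esub> cls [(a,x)]"
          using GP_inv[OF sW] GP_mult[OF h(1)] winv_words[OF sW] by (simp add: winv_def)
        ultimately have "cls h \<in> K #>\<^bsub>GP\<^esub> cls [(a,x)]"
          using subgroup.rcos_module_rev[OF sgK GP_group GP_cls_carrier[OF sW] GP_cls_carrier[OF h(1)]] by simp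
        then have "K #>\<^bsub>GP\<^esub> cls [(a,x)] = K #>\<^bsub>GP\<^esub> cls h"
          using GPg.repr_independence[OF _ GP_cls_carrier[OF sW] sgK] by simp
        then show ?thesis using g h by simp
      qed
    qed
    then show ?thesis by (rule finite_subset) simp
  qed
  define s where "s = cls [(a,x)]"
  define t where "t = cls [(b,y)]"
  have sc: "s \<in> carrier GP" and tc: "t \<in> carrier GP" using GP_cls_carrier sW tW by (auto simp: s_def t_def)
  have ss: "s \<otimes>\<^bsub>GP\<^esub> s = \<one>\<^bsub>GP\<^esub>"
  proof -
    have a1: "eqw ([] @ [(a,x),(a,x)] @ []) ([] @ [(a, x \<otimes>\<^bsub>G a\<^esub> x)] @ [])" by (rule gp_merge) (use aV x in auto)
    have a2: "eqw ([] @ [(a, \<one>\<^bsub>G a\<^esub>)] @ []) ([] @ [])" by (rule gp_unit) (use aV in auto)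
    have "x \<otimes>\<^bsub>G a\<^esub> x = \<one>\<^bsub>G a\<^esub>" using z2_sq[OF grp[OF aV] ca x(2)] .
    then have "eqw [(a,x),(a,x)] []" using eq_trans[OF a1] a2 by simp
    then show ?thesis using GP_mult[OF sW sW] cls_eq_iff GP_one sW by (simp add: s_def)
  qed
  have tt: "t \<otimes>\<^bsub>GP\<^esub> t = \<one>\<^bsub>GP\<^esub>"
  proof -
    have a1: "eqw ([] @ [(b,y),(b,y)] @ []) ([] @ [(b, y \<otimes>\<^bsub>G b\<^esub> y)] @ [])" by (rule gp_merge) (use bV y in auto)
    have a2: "eqw ([] @ [(b, \<one>\<^bsub>G b\<^esub>)] @ []) ([] @ [])" by (rule gp_unit) (use bV in auto)
    have "y \<otimes>\<^bsub>G b\<^esub> y = \<one>\<^bsub>G b\<^esub>" using z2_sq[OF grp[OF bV] cb y(2)] .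
    then have "eqw [(b,y),(b,y)] []" using eq_trans[OF a1] a2 by simp
    then show ?thesis using GP_mult[OF tW tW] cls_eq_iff GP_one tW by (simp add: t_def)
  qed
  define e where "e = s \<otimes>\<^bsub>GP\<^esub> t"
  have ec: "e \<in> carrier GP" using sc tc by (simp add: e_def)
  have eT: "\<forall>g\<in>{s \<otimes>\<^bsub>GP\<^esub> t, t \<otimes>\<^bsub>GP\<^esub> s}. e \<otimes>\<^bsub>GP\<^esub> g = g \<otimes>\<^bsub>GP\<^esub> e"
  proof -
    have "e \<otimes>\<^bsub>GP\<^esub> (t \<otimes>\<^bsub>GP\<^esub> s) = s \<otimes>\<^bsub>GP\<^esub> (t \<otimes>\<^bsub>GP\<^esub> t) \<otimes>\<^bsub>GP\<^esub> s"
      using sc tc by (simp add: e_def GPg.m_assoc)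
    also have "\<dots> = \<one>\<^bsub>GP\<^esub>" using tt ss sc by simp
    also have "\<dots> = t \<otimes>\<^bsub>GP\<^esub> (s \<otimes>\<^bsub>GP\<^esub> s) \<otimes>\<^bsub>GP\<^esub> t" using tt ss tc by simp
    also have "\<dots> = (t \<otimes>\<^bsub>GP\<^esub> s) \<otimes>\<^bsub>GP\<^esub> e" using sc tc by (simp add: e_def GPg.m_assoc)
    finally show ?thesis by (simp add: e_def)
  qed
  have genc: "e \<otimes>\<^bsub>GP\<^esub> g = g \<otimes>\<^bsub>GP\<^esub> e" if "g \<in> generate GP {s \<otimes>\<^bsub>GP\<^esub> t, t \<otimes>\<^bsub>GP\<^esub> s}" for g
    using GPg.gen_comm[OF ec _ eT that] sc tc by simp
  have cm: "\<forall>Z\<in>K. e \<otimes>\<^bsub>GP\<^esub> Z = Z \<otimes>\<^bsub>GP\<^esub> e"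
  proof
    fix Z assume "Z \<in> K"
    then obtain h where h: "Z = cls h" "h \<in> W" "even (cnt h)" by (auto simp: K_def)
    define Q where "Q = filt {a,b} h"
    define R where "R = filt (V - {a,b}) h"
    have QW: "Q \<in> W" and RW: "R \<in> W" using filt_words[OF h(2)] by (auto simp: Q_def R_def)
    have disj: "{a,b} \<inter> (V - {a,b}) = {}" by simp
    have adj: "\<forall>a'\<in>{a,b}. \<forall>c\<in>V - {a,b}. E a' c" using adj_other[OF abP] by blast
    have hv: "verts h \<subseteq> {a,b} \<union> (V - {a,b})" using h(2) aV bV by (auto simp: gp_words_def)
    have e1: "eqw h (Q @ R)"
      using eq_filt_split[OF disj adj h(2)] filt_id[OF hv] by (simp add: R_def Q_def)
    have Zq: "Z = cls Q \<otimes>\<^bsub>GP\<^esub> cls R" using h(1) e1 cls_eq_iff[OF h(2)] GP_mult[OF QW RW] by simp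
    have cQ: "cnt Q = cnt h"
    proof -
      have "cnt (filt S h) = cnt h" if "{a,b} \<subseteq> S" for S
        unfolding cnt_def filt_def using that by (induction h) auto
      then show ?thesis by (simp add: Q_def)
    qed
    obtain r where r: "red r" "eqw Q r" "verts r \<subseteq> verts Q" using exists_red[OF QW] by blast
    have rab: "verts r \<subseteq> {a,b}" using r(3) verts_filt[of "{a,b}" h] by (auto simp: Q_def)
    have "even (cnt r)" using eq_par[OF r(2)] cQ h(3) by simp
    moreover have "cnt r = length r"
    proof -
      have "\<forall>q\<in>set r. fst q \<in> {a,b} \<and> snd q \<noteq> \<one>\<^bsub>G (fst q)\<^esub>"
      proof
        fix q assume q: "q \<in> set r"
        have "nt q" using r(1) q
        proof (induction r)
          case (Cons z r) then show ?case by (cases z) auto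
        qed simp
        then show "fst q \<in> {a,b} \<and> snd q \<noteq> \<one>\<^bsub>G (fst q)\<^esub>" using q rab by (auto simp: nt_def)
      qed
      then show ?thesis by (simp add: cnt_def)
    qed
    ultimately have ev: "even (length r)" by simp
    have T1: "cls [(a,x),(b,y)] \<in> {s \<otimes>\<^bsub>GP\<^esub> t, t \<otimes>\<^bsub>GP\<^esub> s}" using GP_mult[OF sW tW] by (simp add: s_def t_def)
    have T2: "cls [(b,y),(a,x)] \<in> {s \<otimes>\<^bsub>GP\<^esub> t, t \<otimes>\<^bsub>GP\<^esub> s}" using GP_mult[OF tW sW] by (simp add: s_def t_def)
    have "cls r \<in> generate GP {s \<otimes>\<^bsub>GP\<^esub> t, t \<otimes>\<^bsub>GP\<^esub> s}"
      using pair_gen[OF ab ca cb T1 T2 r(1) rab ev] .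
    moreover have "cls Q = cls r" using cls_eq_iff[OF QW] r(2) by simp
    ultimately have cQc: "e \<otimes>\<^bsub>GP\<^esub> cls Q = cls Q \<otimes>\<^bsub>GP\<^esub> e" using genc by simp
    have cR: "e \<otimes>\<^bsub>GP\<^esub> cls R = cls R \<otimes>\<^bsub>GP\<^esub> e"
    proof -
      have adjR: "adjall a R" "adjall b R"
        using adj_other[OF abP] verts_filt[of "V - {a,b}" h] by (auto simp: adjall_def R_def)
      have "eqw ((a,x) # R) (R @ [(a,x)])" using move_right[OF adjR(1) RW aV x(1)] .
      then have "cls ((a,x) # R) = cls (R @ [(a,x)])" using cls_eq_iff[of "(a,x) # R"] sW RW by simp
      then have sR: "s \<otimes>\<^bsub>GP\<^esub> cls R = cls R \<otimes>\<^bsub>GP\<^esub> s" using GP_mult[OF sW RW] GP_mult[OF RW sW] by (simp add: s_def)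
      have "eqw ((b,y) # R) (R @ [(b,y)])" using move_right[OF adjR(2) RW bV y(1)] .
      then have "cls ((b,y) # R) = cls (R @ [(b,y)])" using cls_eq_iff[of "(b,y) # R"] tW RW by simp
      then have tR: "t \<otimes>\<^bsub>GP\<^esub> cls R = cls R \<otimes>\<^bsub>GP\<^esub> t" using GP_mult[OF tW RW] GP_mult[OF RW tW] by (simp add: t_def)
      have Rc: "cls R \<in> carrier GP" using GP_cls_carrier[OF RW] .
      have "e \<otimes>\<^bsub>GP\<^esub> cls R = s \<otimes>\<^bsub>GP\<^esub> (t \<otimes>\<^bsub>GP\<^esub> cls R)" using sc tc Rc by (simp add: e_def GPg.m_assoc)
      also have "\<dots> = (s \<otimes>\<^bsub>GP\<^esub> cls R) \<otimes>\<^bsub>GP\<^esub> t" using tR sc tc Rc by (simp add: GPg.m_assoc)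
      also have "\<dots> = cls R \<otimes>\<^bsub>GP\<^esub> e" using sR sc tc Rc by (simp add: e_def GPg.m_assoc)
      finally show ?thesis .
    qed
    have Qc: "cls Q \<in> carrier GP" and Rc: "cls R \<in> carrier GP" using GP_cls_carrier QW RW by auto
    have "e \<otimes>\<^bsub>GP\<^esub> (cls Q \<otimes>\<^bsub>GP\<^esub> cls R) = cls Q \<otimes>\<^bsub>GP\<^esub> (e \<otimes>\<^bsub>GP\<^esub> cls R)"
      using cQc ec Qc Rc by (simp add: GPg.m_assoc[symmetric])
    also have "\<dots> = (cls Q \<otimes>\<^bsub>GP\<^esub> cls R) \<otimes>\<^bsub>GP\<^esub> e" using cR ec Qc Rc by (simp add: GPg.m_assoc)
    finally show "e \<otimes>\<^bsub>GP\<^esub> Z = Z \<otimes>\<^bsub>GP\<^esub> e" using Zq by simp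
  qed
  have "e \<in> virtual_centre GP" unfolding virtual_centre_def using ec sgK fin cm by blast
  then show ?thesis by (simp add: e_def s_def t_def gp_incl_cls)
qed

end

context gpm begin

lemma Sg_vz: "Sg \<subseteq> virtual_centre GP"
proof
  fix z assume z: "z \<in> Sg"
  show "z \<in> virtual_centre GP"
  proof (cases "z \<in> (\<Union>u \<in> {u. {u} \<in> P}. gp_incl V E G u ` virtual_centre (G u))")
    case True
    then obtain u p where up: "{u} \<in> P" "p \<in> virtual_centre (G u)" "z = gp_incl V E G u p" by blast
    then show ?thesis using s1_vz[OF up(1,2)] by (simp add: gp_incl_cls)
  next
    case False
    then have "z \<in> {gp_incl V E G a x \<otimes>\<^bsub>graph_product V E G\<^esub> gp_incl V E G b y | a b x y.
            {a, b} \<in> P \<and> a \<noteq> b \<and> \<not> E a b \<and> is_Z2 (G a) \<and> is_Z2 (G b)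
            \<and> x \<in> carrier (G a) - {\<one>\<^bsub>G a\<^esub>} \<and> y \<in> carrier (G b) - {\<one>\<^bsub>G b\<^esub>}}" using z by blast
    then obtain a b x y where abxy: "z = gp_incl V E G a x \<otimes>\<^bsub>GP\<^esub> gp_incl V E G b y"
      "{a, b} \<in> P" "a \<noteq> b" "\<not> E a b" "is_Z2 (G a)" "is_Z2 (G b)"
      "x \<in> carrier (G a)" "x \<noteq> \<one>\<^bsub>G a\<^esub>" "y \<in> carrier (G b)" "y \<noteq> \<one>\<^bsub>G b\<^esub>" by blast
    then show ?thesis using s2_vz[OF abxy(2-10)] by simp
  qed
qed

theorem main: "virtual_centre GP = generate GP Sg"
proof
  show "virtual_centre GP \<subseteq> generate GP Sg" using sub_dir by blast
  show "generate GP Sg \<subseteq> virtual_centre GP"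
    using group.generate_subgroup_incl[OF GP_group Sg_vz group.vz_subgroup[OF GP_group]] .
qed

end

theorem lemma2p14:
  fixes V :: "'v set" and E :: "'v \<Rightarrow> 'v \<Rightarrow> bool" and G :: "'v \<Rightarrow> 'g monoid"
    and P :: "'v set set"
  assumes "fin_graph V E"
    and "\<And>v. v \<in> V \<Longrightarrow> group (G v)"
    and "\<And>v. v \<in> V \<Longrightarrow> carrier (G v) \<noteq> {\<one>\<^bsub>G v\<^esub>}"
    and "join_decomposition V E G P"
  shows "virtual_centre (graph_product V E G) =
    generate (graph_product V E G)
      ((\<Union>u \<in> {u. {u} \<in> P}. gp_incl V E G u ` virtual_centre (G u))
       \<union> {gp_incl V E G a x \<otimes>\<^bsub>graph_product V E G\<^esub> gp_incl V E G b y | a b x y.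
            {a, b} \<in> P \<and> a \<noteq> b \<and> \<not> E a b \<and> is_Z2 (G a) \<and> is_Z2 (G b)
            \<and> x \<in> carrier (G a) - {\<one>\<^bsub>G a\<^esub>} \<and> y \<in> carrier (G b) - {\<one>\<^bsub>G b\<^esub>}})"
proof -
  interpret gpm V E G P
  proof (rule gpm.intro)
    show "gpl V E G" by (rule gpl.intro) (use assms in auto)
    show "gpm_axioms V E G P" by (rule gpm_axioms.intro) (use assms in auto)
  qed
  show ?thesis by (rule main)
qed


end
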